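(* Let $p_1 = 2, p_2 = 3, p_3 = 5, \dots$ denote the prime numbers listed in increasing order. For real $x, y > 1$ define $$F(x,y) = \sum_{k=1}^{\infty} x^{k-1}\frac{y^{-x^k}}{(1-y^{-x^k})^2}$$ and $$QNC(x,y) = \frac{1}{12xy}\bigl( x(y-1)F(x,y) - y(x-1)F(y,x)\bigr).$$ Let $\mathbf{R} = [\mathbf{R}_{ij}]_{i,j\ge 1}$ be the infinite matrix with entries $\mathbf{R}_{ij} = QNC(p_i, p_j)$. Then $\mathbf{R}$, acting by matrix multiplication on the Hilbert space $\ell_2$ of square-summable complex column vectors, defines a trace class operator on $\ell_2$.
   Context: A bounded operator $\mathbf{A}$ on a Hilbert space is trace class if the positive operator $|\mathbf{A}| = (\mathbf{A}^*\mathbf{A})^{1/2}$ has pure discrete spectrum with summable eigenvalues (equivalently, the singular values of $\mathbf{A}$ are summable). *)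

theory Defs
  imports "HOL-Analysis.Analysis" "HOL-Computational_Algebra.Primes" "HOL-Library.Infinite_Set"
begin

(* The primes in increasing order, 0-indexed: prime_seq 0 = 2, prime_seq 1 = 3, ... *)
definition prime_seq :: "nat \<Rightarrow> nat" where
  "prime_seq = enumerate {p::nat. prime p}"

definition F :: "real \<Rightarrow> real \<Rightarrow> real" where
  "F x y = (\<Sum>k. x ^ k * (y powr (- (x ^ (Suc k)))) / (1 - y powr (- (x ^ (Suc k))))\<^sup>2)"

definition QNC :: "real \<Rightarrow> real \<Rightarrow> real" where
  "QNC x y = (x * (y - 1) * F x y - y * (x - 1) * F y x) / (12 * x * y)"

(* The infinite matrix R, 0-indexed: R i j = QNC(p_{i+1}, p_{j+1}) *)
definition Rmat :: "nat \<Rightarrow> nat \<Rightarrow> complex" where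
  "Rmat i j = complex_of_real (QNC (real (prime_seq i)) (real (prime_seq j)))"

definition l2 :: "(nat \<Rightarrow> complex) set" where
  "l2 = {x. summable (\<lambda>n. (cmod (x n))\<^sup>2)}"

definition l2_inner :: "(nat \<Rightarrow> complex) \<Rightarrow> (nat \<Rightarrow> complex) \<Rightarrow> complex" where
  "l2_inner x y = (\<Sum>n. x n * cnj (y n))"

definition l2_norm :: "(nat \<Rightarrow> complex) \<Rightarrow> real" where
  "l2_norm x = sqrt (\<Sum>n. (cmod (x n))\<^sup>2)"

definition l2_bounded_op :: "((nat \<Rightarrow> complex) \<Rightarrow> (nat \<Rightarrow> complex)) \<Rightarrow> bool" where
  "l2_bounded_op A \<longleftrightarrow>
     (\<forall>x\<in>l2. A x \<in> l2) \<and>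
     (\<forall>x\<in>l2. \<forall>y\<in>l2. \<forall>a b::complex. A (\<lambda>n. a * x n + b * y n) = (\<lambda>n. a * A x n + b * A y n)) \<and>
     (\<exists>C. \<forall>x\<in>l2. l2_norm (A x) \<le> C * l2_norm x)"

definition l2_adjoint :: "((nat \<Rightarrow> complex) \<Rightarrow> (nat \<Rightarrow> complex)) \<Rightarrow> ((nat \<Rightarrow> complex) \<Rightarrow> (nat \<Rightarrow> complex)) \<Rightarrow> bool" where
  "l2_adjoint A B \<longleftrightarrow> l2_bounded_op B \<and> (\<forall>x\<in>l2. \<forall>y\<in>l2. l2_inner (A x) y = l2_inner x (B y))"

definition l2_positive :: "((nat \<Rightarrow> complex) \<Rightarrow> (nat \<Rightarrow> complex)) \<Rightarrow> bool" where
  "l2_positive P \<longleftrightarrow> l2_bounded_op P \<and> (\<forall>x\<in>l2. \<forall>y\<in>l2. l2_inner (P x) y = l2_inner x (P y))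
      \<and> (\<forall>x\<in>l2. l2_inner (P x) x \<in> \<real> \<and> Re (l2_inner (P x) x) \<ge> 0)"

(* |A| = (A^* A)^(1/2): the (unique) positive operator P with P P = A^* A *)
definition l2_abs_op :: "((nat \<Rightarrow> complex) \<Rightarrow> (nat \<Rightarrow> complex)) \<Rightarrow> ((nat \<Rightarrow> complex) \<Rightarrow> (nat \<Rightarrow> complex)) \<Rightarrow> bool" where
  "l2_abs_op A P \<longleftrightarrow> l2_positive P \<and>
     (\<exists>B. l2_adjoint A B \<and> (\<forall>x\<in>l2. P (P x) = B (A x)))"

(* orthonormal basis of l_2 (l_2 is separable, so indexed by nat) *)
definition l2_onb :: "(nat \<Rightarrow> (nat \<Rightarrow> complex)) \<Rightarrow> bool" where
  "l2_onb e \<longleftrightarrow> (\<forall>n. e n \<in> l2) \<and> (\<forall>m n. l2_inner (e m) (e n) = (if m = n then 1 else 0))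
      \<and> (\<forall>x\<in>l2. (\<forall>n. l2_inner x (e n) = 0) \<longrightarrow> x = (\<lambda>_. 0))"

(* A positive operator P has pure discrete spectrum with summable eigenvalues
   (counted with multiplicity): l_2 has an orthonormal basis of eigenvectors of P
   whose eigenvalues are summable. *)
definition l2_discrete_summable :: "((nat \<Rightarrow> complex) \<Rightarrow> (nat \<Rightarrow> complex)) \<Rightarrow> bool" where
  "l2_discrete_summable P \<longleftrightarrow>
     (\<exists>e ev. l2_onb e \<and> (\<forall>n. P (e n) = (\<lambda>i. complex_of_real (ev n) * e n i)) \<and> summable ev)"

definition trace_class :: "((nat \<Rightarrow> complex) \<Rightarrow> (nat \<Rightarrow> complex)) \<Rightarrow> bool" where
  "trace_class A \<longleftrightarrow> l2_bounded_op A \<and>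
     (\<exists>P. l2_abs_op A P \<and> l2_discrete_summable P)"

definition matrix_op :: "(nat \<Rightarrow> nat \<Rightarrow> complex) \<Rightarrow> (nat \<Rightarrow> complex) \<Rightarrow> (nat \<Rightarrow> complex)" where
  "matrix_op M x = (\<lambda>i. \<Sum>j. M i j * x j)"

end

theory Submission
  imports Defs
begin


lemma has_sum_of_norm_summable:
  fixes f :: "nat \<Rightarrow> complex"
  assumes "summable (\<lambda>n. norm (f n))"
  shows "(f has_sum (\<Sum>n. f n)) UNIV"
  using assms norm_summable_imp_has_sum summable_norm_cancel summable_sums by blast

lemma infsum_eq_suminf_norm:
  fixes f :: "nat \<Rightarrow> complex"
  assumes "summable (\<lambda>n. norm (f n))"
  shows "infsum f UNIV = (\<Sum>n. f n)"
  using has_sum_of_norm_summable[OF assms] infsumI by blast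

lemma abs_summable_on_nat_iff:
  fixes f :: "nat \<Rightarrow> complex"
  shows "(\<lambda>x. norm (f x)) summable_on UNIV \<longleftrightarrow> summable (\<lambda>n. norm (f n))"
proof
  assume "summable (\<lambda>n. norm (f n))"
  then show "(\<lambda>x. norm (f x)) summable_on UNIV"
    using norm_summable_imp_summable_on[of "\<lambda>n. complex_of_real (norm (f n))"] 
    by (simp add: summable_on_iff_abs_summable_on_complex)
next
  assume "(\<lambda>x. norm (f x)) summable_on UNIV"
  then show "summable (\<lambda>n. norm (f n))"
    using summable_on_imp_summable by blast
qed

lemma single_le_suminf:
  fixes f :: "nat \<Rightarrow> real"
  assumes "summable f" "\<And>n. 0 \<le> f n"
  shows "f j \<le> suminf f"
  using sum_le_suminf[OF assms(1), of "{j}"] assms(2) by simp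

lemma suminf_swap_abs:
  fixes f :: "nat \<Rightarrow> nat \<Rightarrow> complex"
  assumes r: "\<And>i. summable (\<lambda>j. norm (f i j))" and s: "summable (\<lambda>i. \<Sum>j. norm (f i j))"
  shows "(\<Sum>i. \<Sum>j. f i j) = (\<Sum>j. \<Sum>i. f i j)"
    and "\<And>j. summable (\<lambda>i. norm (f i j))"
    and "summable (\<lambda>j. \<Sum>i. norm (f i j))"
proof -
  show c: "summable (\<lambda>i. norm (f i j))" for j
  proof (rule summable_comparison_test'[OF s])
    fix i show "norm (norm (f i j)) \<le> (\<Sum>j. norm (f i j))"
      using single_le_suminf[OF r[of i], of j] by simp
  qed
  show "summable (\<lambda>j. \<Sum>i. norm (f i j))"
  proof (rule bounded_imp_summable)
    show "0 \<le> (\<Sum>i. norm (f i j))" for j using c[of j] by (simp add: suminf_nonneg)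
    fix n
    have "(\<Sum>j\<le>n. \<Sum>i. norm (f i j)) = (\<Sum>i. \<Sum>j\<le>n. norm (f i j))"
      using c by (simp add: suminf_sum)
    also have "\<dots> \<le> (\<Sum>i. \<Sum>j. norm (f i j))"
    proof (rule suminf_le)
      show "(\<Sum>j\<le>n. norm (f i j)) \<le> (\<Sum>j. norm (f i j))" for i
        using sum_le_suminf[OF r[of i], of "{..n}"] by simp
      show "summable (\<lambda>i. \<Sum>j\<le>n. norm (f i j))" using c by (simp add: summable_sum)
    qed (use s in auto)
    finally show "(\<Sum>j\<le>n. \<Sum>i. norm (f i j)) \<le> (\<Sum>i. \<Sum>j. norm (f i j))" .
  qed
  have inf_r: "infsum (\<lambda>j. norm (f i j)) UNIV = (\<Sum>j. norm (f i j))" for i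
  proof -
    have "((\<lambda>j. norm (f i j)) has_sum (\<Sum>j. norm (f i j))) UNIV"
      using norm_summable_imp_has_sum[of "\<lambda>j. norm (f i j)" "\<Sum>j. norm (f i j)"] r[of i] summable_sums[OF r[of i]] by simp
    then show ?thesis by (rule infsumI)
  qed
  have rr: "(\<lambda>j. norm (f i j)) summable_on UNIV" for i
    using abs_summable_on_nat_iff[of "f i"] r by simp
  have ss: "(\<lambda>i. norm (infsum (\<lambda>j. norm (f i j)) UNIV)) summable_on UNIV"
  proof -
    have "summable (\<lambda>i. norm (norm (\<Sum>j. norm (f i j))))"
      using s by (simp add: suminf_nonneg r)
    then show ?thesis unfolding inf_r using norm_summable_imp_summable_on[of "\<lambda>i. norm (\<Sum>j. norm (f i j))"] by simp
  qed
  have P: "(\<lambda>x. norm ((\<lambda>(i,j). f i j) x)) summable_on (UNIV \<times> UNIV)"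
  proof (rule iffD2[OF Infinite_Sum.abs_summable_on_Sigma_iff[where f="\<lambda>(i,j). f i j" and A=UNIV and B="\<lambda>_. UNIV"]], intro conjI ballI)
    show "(\<lambda>y. norm ((\<lambda>(i,j). f i j) (x, y))) summable_on UNIV" for x using rr[of x] by simp
    show "(\<lambda>x. norm (\<Sum>\<^sub>\<infinity>y\<in>UNIV. norm ((\<lambda>(i,j). f i j) (x, y)))) summable_on UNIV"
      using ss by simp
  qed
  have P': "(\<lambda>(i,j). f i j) summable_on (UNIV \<times> UNIV)"
    using P abs_summable_summable[OF P] by simp
  have "infsum (\<lambda>i. infsum (\<lambda>j. f i j) UNIV) UNIV = infsum (\<lambda>j. infsum (\<lambda>i. f i j) UNIV) UNIV"
    by (rule infsum_swap_banach[OF P'])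
  moreover have "infsum (\<lambda>j. f i j) UNIV = (\<Sum>j. f i j)" for i
    using infsum_eq_suminf_norm[OF r] by simp
  moreover have "infsum (\<lambda>i. f i j) UNIV = (\<Sum>i. f i j)" for j
    using infsum_eq_suminf_norm[OF c] by simp
  moreover have "summable (\<lambda>i. norm (\<Sum>j. f i j))"
    by (rule summable_comparison_test'[OF s]) (use r in \<open>simp add: summable_norm\<close>)
  moreover have "summable (\<lambda>j. norm (\<Sum>i. f i j))"
    by (rule summable_comparison_test'[OF \<open>summable (\<lambda>j. \<Sum>i. norm (f i j))\<close>]) (use c in \<open>simp add: summable_norm\<close>)
  ultimately show "(\<Sum>i. \<Sum>j. f i j) = (\<Sum>j. \<Sum>i. f i j)"
    using infsum_eq_suminf_norm by simp
qed

lemma l2_iff: "x \<in> l2 \<longleftrightarrow> summable (\<lambda>n. (cmod (x n))\<^sup>2)"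
  by (simp add: l2_def)

lemma l2_norm_nonneg: "x \<in> l2 \<Longrightarrow> l2_norm x \<ge> 0"
  unfolding l2_norm_def l2_def by (simp add: suminf_nonneg)

lemma l2_norm_sq: "x \<in> l2 \<Longrightarrow> (l2_norm x)\<^sup>2 = (\<Sum>n. (cmod (x n))\<^sup>2)"
  unfolding l2_norm_def l2_def by (simp add: suminf_nonneg)

lemma l2_coord_sq_le: "x \<in> l2 \<Longrightarrow> (cmod (x j))\<^sup>2 \<le> (l2_norm x)\<^sup>2"
  using single_le_suminf[of "\<lambda>n. (cmod (x n))\<^sup>2" j] by (simp add: l2_norm_sq l2_def)

lemma l2_coord_le: "x \<in> l2 \<Longrightarrow> cmod (x j) \<le> l2_norm x"
  using l2_coord_sq_le[of x j] l2_norm_nonneg[of x] by (simp add: power2_le_iff_abs_le)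

lemma sq_sum_le: "((u::real) + v)\<^sup>2 \<le> 2 * u\<^sup>2 + 2 * v\<^sup>2"
proof -
  have "0 \<le> (u - v)\<^sup>2" by simp
  thus ?thesis by (simp add: power2_eq_square algebra_simps)
qed

lemma prod_le_sq_sum: "(u::real) \<ge> 0 \<Longrightarrow> v \<ge> 0 \<Longrightarrow> u * v \<le> u\<^sup>2 + v\<^sup>2"
proof -
  assume "u \<ge> 0" "v \<ge> 0"
  hence "0 \<le> u * v" by simp
  moreover have "0 \<le> (u - v)\<^sup>2" by simp
  ultimately show ?thesis by (simp add: power2_eq_square algebra_simps)
qed

lemma l2_lincomb: 
  assumes "x \<in> l2" "y \<in> l2" 
  shows "(\<lambda>n. a * x n + b * y n) \<in> l2"
proof -
  have "(cmod (a * x n + b * y n))\<^sup>2 \<le> 2 * (cmod a)\<^sup>2 * (cmod (x n))\<^sup>2 + 2 * (cmod b)\<^sup>2 * (cmod (y n))\<^sup>2" for n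
  proof -
    have "cmod (a * x n + b * y n) \<le> cmod a * cmod (x n) + cmod b * cmod (y n)"
      using norm_triangle_ineq[of "a * x n" "b * y n"] by (simp add: norm_mult)
    hence "(cmod (a * x n + b * y n))\<^sup>2 \<le> (cmod a * cmod (x n) + cmod b * cmod (y n))\<^sup>2"
      by (rule power_mono) auto
    also have "\<dots> \<le> 2 * (cmod a)\<^sup>2 * (cmod (x n))\<^sup>2 + 2 * (cmod b)\<^sup>2 * (cmod (y n))\<^sup>2"
      using sq_sum_le[of "cmod a * cmod (x n)" "cmod b * cmod (y n)"] by (simp add: power_mult_distrib)
    finally show ?thesis .
  qed
  note le = this
  have sm: "summable (\<lambda>n. 2 * (cmod a)\<^sup>2 * (cmod (x n))\<^sup>2 + 2 * (cmod b)\<^sup>2 * (cmod (y n))\<^sup>2)"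
    using assms unfolding l2_def mem_Collect_eq by (intro summable_add summable_mult)
  show ?thesis unfolding l2_def mem_Collect_eq
  proof (rule summable_comparison_test'[OF sm])
    fix n show "norm ((cmod (a * x n + b * y n))\<^sup>2) \<le> 2 * (cmod a)\<^sup>2 * (cmod (x n))\<^sup>2 + 2 * (cmod b)\<^sup>2 * (cmod (y n))\<^sup>2"
      using le[of n] by simp
  qed
qed

lemma l2_zero: "(\<lambda>_. 0) \<in> l2"
  by (simp add: l2_def)

lemma l2_scale: "x \<in> l2 \<Longrightarrow> (\<lambda>n. a * x n) \<in> l2"
  using l2_lincomb[of x x a 0] by simp

lemma l2_add: "x \<in> l2 \<Longrightarrow> y \<in> l2 \<Longrightarrow> (\<lambda>n. x n + y n) \<in> l2"
  using l2_lincomb[of x y 1 1] by simp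

lemma l2_diff: "x \<in> l2 \<Longrightarrow> y \<in> l2 \<Longrightarrow> (\<lambda>n. x n - y n) \<in> l2"
  using l2_lincomb[of x y 1 "-1"] by simp

lemma l2_finite_support: "(\<And>n. n \<ge> N \<Longrightarrow> x n = 0) \<Longrightarrow> x \<in> l2"
  unfolding l2_def mem_Collect_eq
  by (rule summable_finite[of "{..<N}"]) (simp_all add: not_less)

definition delta :: "nat \<Rightarrow> nat \<Rightarrow> complex" where
  "delta c = (\<lambda>n. if n = c then 1 else 0)"

lemma l2_delta: "delta c \<in> l2"
  by (rule l2_finite_support[of "Suc c"]) (auto simp: delta_def)

lemma cs_abs:
  assumes "x \<in> l2" "y \<in> l2"
  shows "summable (\<lambda>n. cmod (x n) * cmod (y n))"
    and "(\<Sum>n. cmod (x n) * cmod (y n)) \<le> l2_norm x * l2_norm y"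
proof -
  have le: "cmod (x n) * cmod (y n) \<le> (cmod (x n))\<^sup>2 + (cmod (y n))\<^sup>2" for n
    using prod_le_sq_sum[of "cmod (x n)" "cmod (y n)"] by simp
  show sm: "summable (\<lambda>n. cmod (x n) * cmod (y n))"
    by (rule summable_comparison_test'[where g="\<lambda>n. (cmod (x n))\<^sup>2 + (cmod (y n))\<^sup>2"])
      (use assms le in \<open>auto simp: l2_def intro!: summable_add\<close>)
  show "(\<Sum>n. cmod (x n) * cmod (y n)) \<le> l2_norm x * l2_norm y"
  proof (rule suminf_le_const[OF sm])
    fix N
    have "(\<Sum>n<N. cmod (x n) * cmod (y n)) = (\<Sum>n<N. \<bar>cmod (x n)\<bar> * \<bar>cmod (y n)\<bar>)" by simp
    also have "\<dots> \<le> L2_set (\<lambda>n. cmod (x n)) {..<N} * L2_set (\<lambda>n. cmod (y n)) {..<N}"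
      by (rule L2_set_mult_ineq)
    also have "\<dots> \<le> l2_norm x * l2_norm y"
    proof (rule mult_mono)
      show "L2_set (\<lambda>n. cmod (x n)) {..<N} \<le> l2_norm x"
        unfolding L2_set_def l2_norm_def
        using assms(1) by (intro real_sqrt_le_mono sum_le_suminf) (auto simp: l2_def)
      show "L2_set (\<lambda>n. cmod (y n)) {..<N} \<le> l2_norm y"
        unfolding L2_set_def l2_norm_def
        using assms(2) by (intro real_sqrt_le_mono sum_le_suminf) (auto simp: l2_def)
    qed (auto simp: l2_norm_nonneg assms L2_set_def intro!: sum_nonneg)
    finally show "(\<Sum>n<N. cmod (x n) * cmod (y n)) \<le> l2_norm x * l2_norm y" .
  qed
qed

lemma inner_summable:
  assumes "x \<in> l2" "y \<in> l2"
  shows "summable (\<lambda>n. norm (x n * cnj (y n)))" "summable (\<lambda>n. x n * cnj (y n))"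
  using cs_abs(1)[OF assms] by (auto simp: norm_mult intro: summable_norm_cancel)

lemma inner_bound:
  assumes "x \<in> l2" "y \<in> l2"
  shows "cmod (l2_inner x y) \<le> l2_norm x * l2_norm y"
proof -
  have "cmod (l2_inner x y) \<le> (\<Sum>n. norm (x n * cnj (y n)))"
    unfolding l2_inner_def by (rule summable_norm[OF inner_summable(1)[OF assms]])
  also have "\<dots> = (\<Sum>n. cmod (x n) * cmod (y n))" by (simp add: norm_mult)
  also have "\<dots> \<le> l2_norm x * l2_norm y" by (rule cs_abs(2)[OF assms])
  finally show ?thesis .
qed

lemma inner_self: "x \<in> l2 \<Longrightarrow> l2_inner x x = complex_of_real ((l2_norm x)\<^sup>2)"
proof -
  assume x: "x \<in> l2"
  have "l2_inner x x = (\<Sum>n. complex_of_real ((cmod (x n))\<^sup>2))"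
    unfolding l2_inner_def by (simp only: complex_norm_square)
  also have "\<dots> = complex_of_real (\<Sum>n. (cmod (x n))\<^sup>2)"
    using x by (simp add: suminf_of_real l2_def)
  finally show ?thesis using x by (simp add: l2_norm_sq)
qed

lemma inner_lin_left:
  assumes "x \<in> l2" "y \<in> l2" "z \<in> l2"
  shows "l2_inner (\<lambda>n. a * x n + b * y n) z = a * l2_inner x z + b * l2_inner y z"
proof -
  have "l2_inner (\<lambda>n. a * x n + b * y n) z = (\<Sum>n. a * (x n * cnj (z n)) + b * (y n * cnj (z n)))"
    unfolding l2_inner_def by (simp add: algebra_simps)
  also have "\<dots> = (\<Sum>n. a * (x n * cnj (z n))) + (\<Sum>n. b * (y n * cnj (z n)))"
    using inner_summable(2)[OF assms(1,3)] inner_summable(2)[OF assms(2,3)]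
    by (intro suminf_add[symmetric] summable_mult)
  also have "\<dots> = a * l2_inner x z + b * l2_inner y z"
    unfolding l2_inner_def
    using inner_summable(2)[OF assms(1,3)] inner_summable(2)[OF assms(2,3)]
    by (simp add: suminf_mult)
  finally show ?thesis .
qed

lemma inner_cnj: "x \<in> l2 \<Longrightarrow> y \<in> l2 \<Longrightarrow> cnj (l2_inner x y) = l2_inner y x"
proof -
  assume a: "x \<in> l2" "y \<in> l2"
  have "(\<lambda>n. x n * cnj (y n)) sums l2_inner x y"
    unfolding l2_inner_def using inner_summable(2)[OF a] by (rule summable_sums)
  hence "(\<lambda>n. cnj (x n * cnj (y n))) sums cnj (l2_inner x y)" by (simp only: sums_cnj)
  hence "(\<lambda>n. y n * cnj (x n)) sums cnj (l2_inner x y)" by (simp add: mult.commute)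
  thus ?thesis unfolding l2_inner_def by (simp add: sums_iff)
qed

lemma inner_lin_right:
  assumes "x \<in> l2" "y \<in> l2" "z \<in> l2"
  shows "l2_inner z (\<lambda>n. a * x n + b * y n) = cnj a * l2_inner z x + cnj b * l2_inner z y"
proof -
  have "l2_inner z (\<lambda>n. a * x n + b * y n) = cnj (l2_inner (\<lambda>n. a * x n + b * y n) z)"
    using assms by (simp add: inner_cnj l2_lincomb)
  also have "\<dots> = cnj (a * l2_inner x z + b * l2_inner y z)" using inner_lin_left[OF assms] by simp
  also have "\<dots> = cnj a * l2_inner z x + cnj b * l2_inner z y" using assms by (simp add: inner_cnj)
  finally show ?thesis .
qed

lemma norm_zero_imp: "x \<in> l2 \<Longrightarrow> l2_norm x = 0 \<Longrightarrow> x = (\<lambda>_. 0)"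
proof -
  assume x: "x \<in> l2" and z: "l2_norm x = 0"
  have "(\<Sum>n. (cmod (x n))\<^sup>2) = 0" using l2_norm_sq[OF x] z by simp
  hence "\<forall>n. (cmod (x n))\<^sup>2 = 0" using x by (subst (asm) suminf_eq_zero_iff) (auto simp: l2_def)
  thus ?thesis by auto
qed

lemma inner_self_zero_imp: "x \<in> l2 \<Longrightarrow> l2_inner x x = 0 \<Longrightarrow> x = (\<lambda>_. 0)"
  using inner_self norm_zero_imp by fastforce

lemma inner_delta: "l2_inner x (delta c) = x c"
proof -
  have "l2_inner x (delta c) = (\<Sum>n. if n = c then x c else 0)"
    unfolding l2_inner_def delta_def by (rule suminf_cong) auto
  also have "\<dots> = x c" by (subst suminf_finite[of "{c}"]) auto
  finally show ?thesis .
qed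

lemma norm_delta: "l2_norm (delta c) = 1"
proof -
  have "l2_inner (delta c) (delta c) = 1" using inner_delta[of "delta c" c] by (simp add: delta_def)
  hence "complex_of_real ((l2_norm (delta c))\<^sup>2) = 1" using inner_self[OF l2_delta, of c] by simp
  hence "(l2_norm (delta c))\<^sup>2 = 1" using of_real_eq_1_iff by blast
  thus ?thesis using l2_norm_nonneg[OF l2_delta, of c] by (auto simp add: power2_eq_1_iff)
qed

lemma inner_zero_left[simp]: "l2_inner (\<lambda>_. 0) y = 0"
  by (simp add: l2_inner_def)

lemma inner_zero_right[simp]: "l2_inner x (\<lambda>_. 0) = 0"
  by (simp add: l2_inner_def)

lemma norm_zero[simp]: "l2_norm (\<lambda>_. 0) = 0"
  by (simp add: l2_norm_def)


lemma suminf_cnj: "summable f \<Longrightarrow> cnj (suminf f) = (\<Sum>n. cnj (f n))"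
  by (metis summable_sums sums_cnj sums_unique)

locale absmat =
  fixes M :: "nat \<Rightarrow> nat \<Rightarrow> complex"
  assumes rows: "\<And>i. summable (\<lambda>j. norm (M i j))"
    and tot: "summable (\<lambda>i. \<Sum>j. norm (M i j))"
begin

definition r :: "nat \<Rightarrow> real" where "r i = (\<Sum>j. norm (M i j))"
definition RR :: real where "RR = (\<Sum>i. r i)"

abbreviation A where "A \<equiv> matrix_op M"

lemma r_nonneg: "r i \<ge> 0"
  unfolding r_def using rows by (simp add: suminf_nonneg)

lemma r_summable: "summable r"
  using tot unfolding r_def by simp

lemma r_le_RR: "r i \<le> RR"
  unfolding RR_def using single_le_suminf[OF r_summable r_nonneg] .

lemma RR_nonneg: "RR \<ge> 0"
  using r_le_RR[of 0] r_nonneg[of 0] by simp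

lemma row_norm_summable:
  assumes "x \<in> l2"
  shows "summable (\<lambda>j. norm (M i j * x j))"
proof (rule summable_comparison_test'[where g="\<lambda>j. l2_norm x * norm (M i j)"])
  show "summable (\<lambda>j. l2_norm x * norm (M i j))" using rows by (rule summable_mult)
  fix j show "norm (norm (M i j * x j)) \<le> l2_norm x * norm (M i j)"
    using l2_coord_le[OF assms, of j] by (simp add: norm_mult mult.commute[of "cmod (M i j)"] mult_right_mono)
qed

lemma row_summable: "x \<in> l2 \<Longrightarrow> summable (\<lambda>j. M i j * x j)"
  by (rule summable_norm_cancel[OF row_norm_summable])

lemma A_coord_bound:
  assumes "x \<in> l2"
  shows "norm (A x i) \<le> r i * l2_norm x"
proof -
  have "norm (A x i) \<le> (\<Sum>j. norm (M i j * x j))"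
    unfolding matrix_op_def by (rule summable_norm[OF row_norm_summable[OF assms]])
  also have "\<dots> \<le> (\<Sum>j. l2_norm x * norm (M i j))"
  proof (rule suminf_le)
    show "norm (M i j * x j) \<le> l2_norm x * norm (M i j)" for j
      using l2_coord_le[OF assms, of j] by (simp add: norm_mult mult.commute[of "cmod (M i j)"] mult_right_mono)
    show "summable (\<lambda>j. norm (M i j * x j))" by (rule row_norm_summable[OF assms])
    show "summable (\<lambda>j. l2_norm x * norm (M i j))" using rows by (rule summable_mult)
  qed
  also have "\<dots> = r i * l2_norm x"
    unfolding r_def using suminf_mult[OF rows[of i], of "l2_norm x"] by (simp only: mult.commute)
  finally show ?thesis .
qed

lemma A_l2:
  assumes "x \<in> l2"
  shows "A x \<in> l2" and "(l2_norm (A x))\<^sup>2 \<le> RR\<^sup>2 * (l2_norm x)\<^sup>2"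
proof -
  have le: "(cmod (A x i))\<^sup>2 \<le> (RR * (l2_norm x)\<^sup>2) * r i" for i
  proof -
    have "(cmod (A x i))\<^sup>2 \<le> (r i * l2_norm x)\<^sup>2"
      using A_coord_bound[OF assms, of i] by (rule power_mono) simp
    also have "\<dots> = r i * r i * (l2_norm x)\<^sup>2" by (simp add: power2_eq_square)
    also have "\<dots> \<le> RR * r i * (l2_norm x)\<^sup>2"
      using r_le_RR[of i] r_nonneg[of i] by (intro mult_right_mono) simp_all
    finally show ?thesis by (simp add: mult_ac)
  qed
  have sm: "summable (\<lambda>i. (RR * (l2_norm x)\<^sup>2) * r i)"
    using r_summable by (rule summable_mult)
  show Al2: "A x \<in> l2" unfolding l2_def mem_Collect_eq
    by (rule summable_comparison_test'[OF sm]) (use le in simp)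
  have "(l2_norm (A x))\<^sup>2 = (\<Sum>i. (cmod (A x i))\<^sup>2)" by (rule l2_norm_sq[OF Al2])
  also have "\<dots> \<le> (\<Sum>i. (RR * (l2_norm x)\<^sup>2) * r i)"
    by (rule suminf_le[OF le _ sm]) (use Al2 in \<open>simp add: l2_def\<close>)
  also have "\<dots> = RR\<^sup>2 * (l2_norm x)\<^sup>2"
    using r_summable by (simp add: suminf_mult RR_def power2_eq_square)
  finally show "(l2_norm (A x))\<^sup>2 \<le> RR\<^sup>2 * (l2_norm x)\<^sup>2" .
qed

lemma A_norm_le: "x \<in> l2 \<Longrightarrow> l2_norm (A x) \<le> RR * l2_norm x"
proof -
  assume x: "x \<in> l2"
  have "(l2_norm (A x))\<^sup>2 \<le> (RR * l2_norm x)\<^sup>2" using A_l2(2)[OF x] by (simp add: power_mult_distrib)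
  thus ?thesis using RR_nonneg l2_norm_nonneg[OF x] by (simp add: power2_le_iff_abs_le)
qed

lemma A_lin:
  assumes "x \<in> l2" "y \<in> l2"
  shows "A (\<lambda>n. a * x n + b * y n) = (\<lambda>n. a * A x n + b * A y n)"
proof
  fix i
  have "A (\<lambda>n. a * x n + b * y n) i = (\<Sum>j. a * (M i j * x j) + b * (M i j * y j))"
    unfolding matrix_op_def by (simp add: algebra_simps)
  also have "\<dots> = (\<Sum>j. a * (M i j * x j)) + (\<Sum>j. b * (M i j * y j))"
    using row_summable[OF assms(1)] row_summable[OF assms(2)]
    by (intro suminf_add[symmetric] summable_mult)
  also have "\<dots> = a * A x i + b * A y i"
    unfolding matrix_op_def using row_summable[OF assms(1)] row_summable[OF assms(2)]
    by (simp add: suminf_mult)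
  finally show "A (\<lambda>n. a * x n + b * y n) i = a * A x i + b * A y i" .
qed

lemma A_bounded: "l2_bounded_op A"
  unfolding l2_bounded_op_def using A_l2(1) A_lin A_norm_le by blast

lemma A_zero: "A (\<lambda>_. 0) = (\<lambda>_. 0)"
  by (simp add: matrix_op_def)

definition Mt :: "nat \<Rightarrow> nat \<Rightarrow> complex" where "Mt i j = cnj (M j i)"

lemma absmat_Mt: "absmat Mt"
proof
  show "summable (\<lambda>j. norm (Mt i j))" for i
    unfolding Mt_def using suminf_swap_abs(2)[OF rows tot] by simp
  show "summable (\<lambda>i. \<Sum>j. norm (Mt i j))"
    unfolding Mt_def using suminf_swap_abs(3)[OF rows tot] by simp
qed

abbreviation B where "B \<equiv> matrix_op Mt"

lemma adjoint_eq:
  assumes x: "x \<in> l2" and y: "y \<in> l2"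
  shows "l2_inner (A x) y = l2_inner x (B y)"
proof -
  let ?f = "\<lambda>i j. M i j * x j * cnj (y i)"
  have rs: "summable (\<lambda>j. norm (?f i j))" for i
    using row_norm_summable[OF x, of i] by (simp add: norm_mult summable_mult2)
  have rb: "(\<Sum>j. norm (?f i j)) = (\<Sum>j. norm (M i j * x j)) * norm (y i)" for i
    using row_norm_summable[OF x, of i] by (simp add: norm_mult suminf_mult2)
  have ts: "summable (\<lambda>i. \<Sum>j. norm (?f i j))"
  proof (rule summable_comparison_test'[where g="\<lambda>i. r i * (l2_norm x * l2_norm y)"])
    show "summable (\<lambda>i. r i * (l2_norm x * l2_norm y))" using r_summable by (rule summable_mult2)
    fix i
    have "(\<Sum>j. norm (M i j * x j)) \<le> (\<Sum>j. l2_norm x * norm (M i j))"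
    proof (rule suminf_le)
      show "norm (M i j * x j) \<le> l2_norm x * norm (M i j)" for j
        using l2_coord_le[OF x, of j] by (simp add: norm_mult mult.commute[of "cmod (M i j)"] mult_right_mono)
      show "summable (\<lambda>j. norm (M i j * x j))" by (rule row_norm_summable[OF x])
      show "summable (\<lambda>j. l2_norm x * norm (M i j))" using rows by (rule summable_mult)
    qed
    also have "\<dots> = l2_norm x * r i" unfolding r_def using rows by (simp add: suminf_mult)
    finally have a: "(\<Sum>j. norm (M i j * x j)) \<le> l2_norm x * r i" .
    have "norm (\<Sum>j. norm (?f i j)) = (\<Sum>j. norm (M i j * x j)) * norm (y i)"
      using rb[of i] suminf_nonneg[OF row_norm_summable[OF x, of i]] by simp
    also have "\<dots> \<le> (l2_norm x * r i) * l2_norm y"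
      by (rule mult_mono[OF a l2_coord_le[OF y]]) (simp_all add: l2_norm_nonneg x r_nonneg)
    finally show "norm (\<Sum>j. norm (?f i j)) \<le> r i * (l2_norm x * l2_norm y)" by (simp add: mult_ac)
  qed
  have "l2_inner (A x) y = (\<Sum>i. \<Sum>j. ?f i j)"
    unfolding l2_inner_def matrix_op_def
    using row_summable[OF x] by (simp add: suminf_mult2)
  also have "\<dots> = (\<Sum>j. \<Sum>i. ?f i j)" by (rule suminf_swap_abs(1)[OF rs ts])
  also have "\<dots> = l2_inner x (B y)"
  proof -
    have "(\<Sum>i. ?f i j) = x j * cnj (B y j)" for j
    proof -
      have cs: "summable (\<lambda>i. M i j * cnj (y i))"
      proof (rule summable_norm_cancel, rule summable_comparison_test'[where g="\<lambda>i. l2_norm y * norm (M i j)"])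
        show "summable (\<lambda>i. l2_norm y * norm (M i j))"
          using suminf_swap_abs(2)[OF rows tot] by (rule summable_mult)
        show "norm (norm (M i j * cnj (y i))) \<le> l2_norm y * norm (M i j)" for i
          using l2_coord_le[OF y, of i] by (simp add: norm_mult mult.commute[of "cmod (M i j)"] mult_right_mono)
      qed
      have "summable (\<lambda>i. Mt j i * y i)"
        by (rule absmat.row_summable[OF absmat_Mt y])
      hence "cnj (B y j) = (\<Sum>i. cnj (Mt j i * y i))" unfolding matrix_op_def by (rule suminf_cnj)
      also have "\<dots> = (\<Sum>i. M i j * cnj (y i))" by (simp add: Mt_def)
      finally have "x j * cnj (B y j) = x j * (\<Sum>i. M i j * cnj (y i))" by simp
      also have "\<dots> = (\<Sum>i. x j * (M i j * cnj (y i)))"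
        using cs by (simp add: suminf_mult)
      finally show ?thesis by (simp add: mult_ac)
    qed
    thus ?thesis unfolding l2_inner_def by simp
  qed
  finally show ?thesis .
qed

end


lemma pointwise_subseq:
  fixes xs :: "nat \<Rightarrow> nat \<Rightarrow> complex"
  assumes b: "\<And>k j. cmod (xs k j) \<le> 1"
  shows "\<exists>rr z. strict_mono rr \<and> (\<forall>j. (\<lambda>k. xs (rr k) j) \<longlonglongrightarrow> z j)"
proof -
  let ?S = "PiE UNIV (\<lambda>_::nat. cball (0::complex) 1)"
  have "compactin (product_topology (\<lambda>_. euclidean) UNIV) ?S"
    by (subst compactin_PiE) auto
  hence "compact ?S" by (simp add: euclidean_product_topology)
  hence sc: "seq_compact ?S" by (rule compact_imp_seq_compact)
  have "\<forall>k. xs k \<in> ?S" using b by (auto simp: PiE_def)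
  then obtain z rr where rr: "strict_mono rr" and lim: "(xs \<circ> rr) \<longlonglongrightarrow> z"
    using sc unfolding seq_compact_def by meson
  have "(\<lambda>k. xs (rr k) j) \<longlonglongrightarrow> z j" for j
  proof -
    have "continuous_on UNIV (\<lambda>f::nat\<Rightarrow>complex. f j)" by simp
    hence "\<forall>x\<in>UNIV. isCont (\<lambda>f::nat\<Rightarrow>complex. f j) x" by (simp only: continuous_on_eq_continuous_at[OF open_UNIV])
    hence "isCont (\<lambda>f::nat\<Rightarrow>complex. f j) z" by simp
    from isCont_tendsto_compose[OF this lim] show ?thesis by (simp add: o_def)
  qed
  thus ?thesis using rr by blast
qed


definition wconv :: "(nat \<Rightarrow> nat \<Rightarrow> complex) \<Rightarrow> (nat \<Rightarrow> complex) \<Rightarrow> bool" where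
  "wconv xs z \<longleftrightarrow> (\<forall>k. xs k \<in> l2 \<and> l2_norm (xs k) \<le> 1) \<and> (\<forall>j. (\<lambda>k. xs k j) \<longlonglongrightarrow> z j)"

lemma wconv_l2:
  assumes w: "wconv xs z"
  shows "z \<in> l2" "l2_norm z \<le> 1"
proof -
  have l2: "xs k \<in> l2" and nb: "l2_norm (xs k) \<le> 1" and lim: "(\<lambda>k. xs k j) \<longlonglongrightarrow> z j" for k j
    using w unfolding wconv_def by auto
  have part: "(\<Sum>j<N. (cmod (z j))\<^sup>2) \<le> 1" for N
  proof (rule LIMSEQ_le_const2)
    show "(\<lambda>k. \<Sum>j<N. (cmod (xs k j))\<^sup>2) \<longlonglongrightarrow> (\<Sum>j<N. (cmod (z j))\<^sup>2)"
      by (intro tendsto_sum tendsto_power tendsto_norm lim)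
    show "\<exists>N0. \<forall>k\<ge>N0. (\<Sum>j<N. (cmod (xs k j))\<^sup>2) \<le> 1"
    proof (intro exI allI impI)
      fix k
      have "(\<Sum>j<N. (cmod (xs k j))\<^sup>2) \<le> (\<Sum>j. (cmod (xs k j))\<^sup>2)"
        using l2[of k] by (intro sum_le_suminf) (simp_all add: l2_def)
      also have "\<dots> = (l2_norm (xs k))\<^sup>2" using l2_norm_sq[OF l2[of k]] by simp
      also have "\<dots> \<le> 1" using nb[of k] l2_norm_nonneg[OF l2[of k]] by (simp add: power_le_one)
      finally show "(\<Sum>j<N. (cmod (xs k j))\<^sup>2) \<le> 1" .
    qed
  qed
  show zl2: "z \<in> l2" unfolding l2_def mem_Collect_eq
  proof (rule bounded_imp_summable)
    show "0 \<le> (cmod (z n))\<^sup>2" for n by simp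
    show "(\<Sum>j\<le>n. (cmod (z j))\<^sup>2) \<le> 1" for n using part[of "Suc n"] by (simp add: lessThan_Suc_atMost)
  qed
  have "(\<Sum>j. (cmod (z j))\<^sup>2) \<le> 1"
    by (rule suminf_le_const) (use zl2 part in \<open>simp_all add: l2_def\<close>)
  thus "l2_norm z \<le> 1" unfolding l2_norm_def by simp
qed

lemma wconv_subseq:
  fixes xs :: "nat \<Rightarrow> nat \<Rightarrow> complex"
  assumes w: "\<And>k. xs k \<in> l2" "\<And>k. l2_norm (xs k) \<le> 1"
  shows "\<exists>rr z. strict_mono rr \<and> wconv (xs \<circ> rr) z"
proof -
  have "cmod (xs k j) \<le> 1" for k j using l2_coord_le[OF w(1), of k j] w(2)[of k] by simp
  then obtain rr z where "strict_mono rr" "\<forall>j. (\<lambda>k. xs (rr k) j) \<longlonglongrightarrow> z j"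
    using pointwise_subseq[of xs] by blast
  thus ?thesis unfolding wconv_def using w by auto
qed

lemma norm_diff_sq_le:
  assumes "x \<in> l2" "z \<in> l2"
  shows "(l2_norm (\<lambda>j. x j - z j))\<^sup>2 \<le> 2 * (l2_norm x)\<^sup>2 + 2 * (l2_norm z)\<^sup>2"
proof -
  have d: "(\<lambda>j. x j - z j) \<in> l2" by (rule l2_diff[OF assms])
  have le: "(cmod (x j - z j))\<^sup>2 \<le> 2 * (cmod (x j))\<^sup>2 + 2 * (cmod (z j))\<^sup>2" for j
  proof -
    have "cmod (x j - z j) \<le> cmod (x j) + cmod (z j)" by (rule norm_triangle_ineq4)
    hence "(cmod (x j - z j))\<^sup>2 \<le> (cmod (x j) + cmod (z j))\<^sup>2" by (rule power_mono) simp
    also have "\<dots> \<le> 2 * (cmod (x j))\<^sup>2 + 2 * (cmod (z j))\<^sup>2" by (rule sq_sum_le)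
    finally show ?thesis .
  qed
  have "(l2_norm (\<lambda>j. x j - z j))\<^sup>2 = (\<Sum>j. (cmod (x j - z j))\<^sup>2)" using l2_norm_sq[OF d] by simp
  also have "\<dots> \<le> (\<Sum>j. 2 * (cmod (x j))\<^sup>2 + 2 * (cmod (z j))\<^sup>2)"
    by (rule suminf_le[OF le]) (use d assms in \<open>simp_all add: l2_def summable_add summable_mult\<close>)
  also have "\<dots> = 2 * (l2_norm x)\<^sup>2 + 2 * (l2_norm z)\<^sup>2"
    using assms by (simp add: l2_def suminf_add[symmetric] suminf_mult l2_norm_sq summable_mult)
  finally show ?thesis .
qed

lemma norm_diff_le2:
  assumes "x \<in> l2" "z \<in> l2" "l2_norm x \<le> 1" "l2_norm z \<le> 1"
  shows "l2_norm (\<lambda>j. x j - z j) \<le> 2"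
proof -
  have "(l2_norm x)\<^sup>2 \<le> 1" "(l2_norm z)\<^sup>2 \<le> 1"
    using assms l2_norm_nonneg by (simp_all add: power_le_one)
  hence "(l2_norm (\<lambda>j. x j - z j))\<^sup>2 \<le> 2\<^sup>2" using norm_diff_sq_le[OF assms(1,2)] by simp
  thus ?thesis using power_le_imp_le_base[of "l2_norm (\<lambda>j. x j - z j)" 1 2] by (simp add: power2_eq_square)
qed

definition trunc :: "nat \<Rightarrow> (nat \<Rightarrow> complex) \<Rightarrow> nat \<Rightarrow> complex" where
  "trunc N v = (\<lambda>j. if j < N then v j else 0)"

lemma trunc_l2: "trunc N v \<in> l2"
  by (rule l2_finite_support[of N]) (simp add: trunc_def)

lemma inner_trunc: "l2_inner x (trunc N v) = (\<Sum>j<N. x j * cnj (v j))"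
  unfolding l2_inner_def trunc_def by (subst suminf_finite[of "{..<N}"]) auto

lemma trunc_tail:
  assumes v: "v \<in> l2"
  shows "(\<lambda>N. (l2_norm (\<lambda>j. v j - trunc N v j))\<^sup>2) \<longlonglongrightarrow> 0"
proof -
  let ?f = "\<lambda>j. (cmod (v j))\<^sup>2"
  have sm: "?f sums (\<Sum>j. ?f j)" using v by (simp add: l2_def summable_sums)
  have eq: "(l2_norm (\<lambda>j. v j - trunc N v j))\<^sup>2 = (\<Sum>j. ?f j) - (\<Sum>j<N. ?f j)" for N
  proof -
    have s2: "(\<lambda>j. if j \<in> {..<N} then 0 else ?f j) sums ((\<Sum>j. ?f j) - (\<Sum>j<N. ?f j))"
      by (rule sums_If_finite_set'[OF sm]) (simp_all add: sum_negf)
    have "(\<lambda>j. v j - trunc N v j) \<in> l2" by (rule l2_diff[OF v trunc_l2])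
    hence "(l2_norm (\<lambda>j. v j - trunc N v j))\<^sup>2 = (\<Sum>j. (cmod (v j - trunc N v j))\<^sup>2)"
      by (rule l2_norm_sq)
    also have "\<dots> = (\<Sum>j. if j \<in> {..<N} then 0 else ?f j)"
      by (rule suminf_cong) (simp add: trunc_def)
    also have "\<dots> = (\<Sum>j. ?f j) - (\<Sum>j<N. ?f j)" using s2 by (simp add: sums_iff)
    finally show ?thesis .
  qed
  have "(\<lambda>N. (\<Sum>j. ?f j) - (\<Sum>j<N. ?f j)) \<longlonglongrightarrow> (\<Sum>j. ?f j) - (\<Sum>j. ?f j)"
    using v by (intro tendsto_diff tendsto_const summable_LIMSEQ) (simp add: l2_def)
  thus ?thesis unfolding eq by simp
qed

lemma wconv_inner:
  assumes w: "wconv xs z" and v: "v \<in> l2"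
  shows "(\<lambda>k. l2_inner (xs k) v) \<longlonglongrightarrow> l2_inner z v"
proof -
  have l2: "xs k \<in> l2" and nb: "l2_norm (xs k) \<le> 1" and lim: "(\<lambda>k. xs k j) \<longlonglongrightarrow> z j" for k j
    using w unfolding wconv_def by auto
  have zl2: "z \<in> l2" and zn: "l2_norm z \<le> 1" using wconv_l2[OF w] by auto
  show ?thesis unfolding LIMSEQ_iff
  proof (intro allI impI)
    fix e :: real assume e: "0 < e"
    have "e / 4 > 0" using e by simp
    hence "(e/4)\<^sup>2 > 0" by simp
    from LIMSEQ_D[OF trunc_tail[OF v] this] obtain N where
      N: "norm ((l2_norm (\<lambda>j. v j - trunc N v j))\<^sup>2 - 0) < (e/4)\<^sup>2" by blast
    have dl2: "(\<lambda>j. v j - trunc N v j) \<in> l2" by (rule l2_diff[OF v trunc_l2])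
    have tailN: "l2_norm (\<lambda>j. v j - trunc N v j) < e / 4"
    proof -
      have "(l2_norm (\<lambda>j. v j - trunc N v j))\<^sup>2 < (e/4)\<^sup>2" using N by simp
      thus ?thesis using e power_less_imp_less_base[of "l2_norm (\<lambda>j. v j - trunc N v j)" 2 "e/4"] by simp
    qed
    have fin: "(\<lambda>k. l2_inner (xs k) (trunc N v)) \<longlonglongrightarrow> l2_inner z (trunc N v)"
      unfolding inner_trunc by (intro tendsto_sum tendsto_mult tendsto_const lim)
    have "e / 2 > 0" using e by simp
    from LIMSEQ_D[OF fin this] obtain no where
      no: "\<And>k. k \<ge> no \<Longrightarrow> norm (l2_inner (xs k) (trunc N v) - l2_inner z (trunc N v)) < e / 2" by blast
    show "\<exists>no. \<forall>k\<ge>no. norm (l2_inner (xs k) v - l2_inner z v) < e"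
    proof (intro exI allI impI)
      fix k assume k: "no \<le> k"
      let ?d = "\<lambda>j. xs k j - z j"
      have dk: "?d \<in> l2" by (rule l2_diff[OF l2 zl2])
      have split: "v = (\<lambda>j. 1 * trunc N v j + 1 * (v j - trunc N v j))" by (simp add: fun_eq_iff)
      have "l2_inner (xs k) v - l2_inner z v = l2_inner ?d v"
        using inner_lin_left[OF l2[of k] zl2 v, of 1 "-1"] by simp
      also have "\<dots> = l2_inner ?d (trunc N v) + l2_inner ?d (\<lambda>j. v j - trunc N v j)"
        using inner_lin_right[OF trunc_l2[of N v] dl2 dk, where a=1 and b=1] split by simp
      also have "l2_inner ?d (trunc N v) = l2_inner (xs k) (trunc N v) - l2_inner z (trunc N v)"
        using inner_lin_left[OF l2[of k] zl2 trunc_l2[of N v], where a=1 and b="-1"] by simp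
      finally have eq: "l2_inner (xs k) v - l2_inner z v =
          (l2_inner (xs k) (trunc N v) - l2_inner z (trunc N v)) + l2_inner ?d (\<lambda>j. v j - trunc N v j)" .
      have b2: "norm (l2_inner ?d (\<lambda>j. v j - trunc N v j)) \<le> 2 * (e / 4)"
      proof -
        have "norm (l2_inner ?d (\<lambda>j. v j - trunc N v j)) \<le> l2_norm ?d * l2_norm (\<lambda>j. v j - trunc N v j)"
          by (rule inner_bound[OF dk dl2])
        also have "\<dots> \<le> 2 * (e / 4)"
          using norm_diff_le2[OF l2[of k] zl2 nb[of k] zn] tailN l2_norm_nonneg[OF dk] l2_norm_nonneg[OF dl2]
          by (intro mult_mono) simp_all
        finally show ?thesis .
      qed
      have "norm (l2_inner (xs k) v - l2_inner z v) \<le>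
          norm (l2_inner (xs k) (trunc N v) - l2_inner z (trunc N v)) + norm (l2_inner ?d (\<lambda>j. v j - trunc N v j))"
        unfolding eq by (rule norm_triangle_ineq)
      also have "\<dots> < e / 2 + 2 * (e / 4)" using no[OF k] b2 by simp
      finally show "norm (l2_inner (xs k) v - l2_inner z v) < e" by simp
    qed
  qed
qed

context absmat
begin

lemma A_wconv:
  assumes w: "wconv xs z"
  shows "(\<lambda>k. A (xs k) i) \<longlonglongrightarrow> A z i"
proof -
  have l2: "xs k \<in> l2" and nb: "l2_norm (xs k) \<le> 1" and lim: "(\<lambda>k. xs k j) \<longlonglongrightarrow> z j" for k j
    using w unfolding wconv_def by auto
  have bd: "norm (M i j * xs k j) \<le> norm (M i j)" for j k
  proof -
    have "cmod (xs k j) \<le> 1" using l2_coord_le[OF l2[of k], of j] nb[of k] by simp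
    thus ?thesis by (simp add: norm_mult mult_left_le)
  qed
  have "(\<lambda>k. \<Sum>j. M i j * xs k j) \<longlonglongrightarrow> (\<Sum>j. M i j * z j)"
  proof (rule conjunct2[OF conjunct2[OF tannerys_theorem]])
    show "((\<lambda>k. M i j * xs k j) \<longlongrightarrow> M i j * z j) sequentially" for j
      by (intro tendsto_mult tendsto_const lim)
    show "\<forall>\<^sub>F (j, k) in at_top \<times>\<^sub>F sequentially. norm (M i j * xs k j) \<le> norm (M i j)"
      using bd by (simp add: always_eventually case_prod_beta)
    show "summable (\<lambda>j. norm (M i j))" by (rule rows)
  qed simp
  thus ?thesis unfolding matrix_op_def .
qed

lemma A_wconv_norm:
  assumes w: "wconv xs z"
  shows "(\<lambda>k. (l2_norm (A (xs k)))\<^sup>2) \<longlonglongrightarrow> (l2_norm (A z))\<^sup>2"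
proof -
  have l2: "xs k \<in> l2" and nb: "l2_norm (xs k) \<le> 1" for k
    using w unfolding wconv_def by auto
  have zl2: "z \<in> l2" using wconv_l2[OF w] by simp
  have bd: "norm ((cmod (A (xs k) i))\<^sup>2) \<le> RR * r i" for i k
  proof -
    have "cmod (A (xs k) i) \<le> r i * l2_norm (xs k)" by (rule A_coord_bound[OF l2])
    also have "\<dots> \<le> r i" using nb[of k] r_nonneg[of i] by (simp add: mult_left_le)
    finally have a: "cmod (A (xs k) i) \<le> r i" .
    have "(cmod (A (xs k) i))\<^sup>2 \<le> (r i)\<^sup>2" by (rule power_mono[OF a]) simp
    also have "\<dots> \<le> RR * r i" using r_le_RR[of i] r_nonneg[of i] by (simp add: power2_eq_square mult_right_mono)
    finally show ?thesis by simp
  qed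
  have "(\<lambda>k. \<Sum>i. (cmod (A (xs k) i))\<^sup>2) \<longlonglongrightarrow> (\<Sum>i. (cmod (A z i))\<^sup>2)"
  proof (rule conjunct2[OF conjunct2[OF tannerys_theorem]])
    show "((\<lambda>k. (cmod (A (xs k) i))\<^sup>2) \<longlongrightarrow> (cmod (A z i))\<^sup>2) sequentially" for i
      by (intro tendsto_power tendsto_norm A_wconv[OF w])
    show "\<forall>\<^sub>F (i, k) in at_top \<times>\<^sub>F sequentially. norm ((cmod (A (xs k) i))\<^sup>2) \<le> RR * r i"
      using bd by (simp add: always_eventually case_prod_beta)
    show "summable (\<lambda>i. RR * r i)" using r_summable by (rule summable_mult)
  qed simp
  thus ?thesis using l2_norm_sq[OF A_l2(1)[OF l2]] l2_norm_sq[OF A_l2(1)[OF zl2]] by simp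
qed

end


lemma exists_max:
  fixes S :: "(nat \<Rightarrow> complex) set" and \<Phi> :: "(nat \<Rightarrow> complex) \<Rightarrow> real"
  assumes Sl2: "S \<subseteq> l2" and S0: "(\<lambda>_. 0) \<in> S"
    and cl: "\<And>xs z. wconv xs z \<Longrightarrow> (\<And>k. xs k \<in> S) \<Longrightarrow> z \<in> S"
    and ct: "\<And>xs z. wconv xs z \<Longrightarrow> (\<And>k. xs k \<in> S) \<Longrightarrow> (\<lambda>k. \<Phi> (xs k)) \<longlonglongrightarrow> \<Phi> z"
    and bd: "\<And>x. x \<in> S \<Longrightarrow> l2_norm x \<le> 1 \<Longrightarrow> \<Phi> x \<le> C"
  shows "\<exists>x\<in>S. l2_norm x \<le> 1 \<and> (\<forall>y\<in>S. l2_norm y \<le> 1 \<longrightarrow> \<Phi> y \<le> \<Phi> x)"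
proof -
  define K where "K = {x\<in>S. l2_norm x \<le> 1}"
  define m where "m = Sup (\<Phi> ` K)"
  have ne: "\<Phi> ` K \<noteq> {}" using S0 unfolding K_def by force
  have bda: "bdd_above (\<Phi> ` K)" unfolding K_def using bd by (intro bdd_aboveI) blast
  have "\<exists>y\<in>K. m - inverse (real (Suc k)) < \<Phi> y" for k
  proof -
    have "m - inverse (real (Suc k)) < m" by simp
    hence "\<exists>v\<in>\<Phi> ` K. m - inverse (real (Suc k)) < v"
      unfolding m_def using less_cSup_iff[OF ne bda] by blast
    thus ?thesis by blast
  qed
  then obtain ys where ys: "\<And>k. ys k \<in> K" "\<And>k. m - inverse (real (Suc k)) < \<Phi> (ys k)"
    by metis
  have ysl2: "ys k \<in> l2" "l2_norm (ys k) \<le> 1" for k using ys(1)[of k] Sl2 unfolding K_def by auto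
  obtain rr z where rr: "strict_mono rr" and w: "wconv (ys \<circ> rr) z"
    using wconv_subseq[of ys] ysl2 by blast
  have inS: "(ys \<circ> rr) k \<in> S" for k using ys(1)[of "rr k"] unfolding K_def by simp
  have zS: "z \<in> S" by (rule cl[OF w inS])
  have zn: "l2_norm z \<le> 1" using wconv_l2[OF w] by simp
  have lim: "(\<lambda>k. \<Phi> ((ys \<circ> rr) k)) \<longlonglongrightarrow> \<Phi> z" by (rule ct[OF w inS])
  have "m \<le> \<Phi> z"
  proof (rule LIMSEQ_le[OF _ lim])
    show "(\<lambda>k. m - inverse (real (Suc k))) \<longlonglongrightarrow> m"
      using tendsto_diff[OF tendsto_const LIMSEQ_inverse_real_of_nat, of m] by simp
    show "\<exists>N. \<forall>n\<ge>N. m - inverse (real (Suc n)) \<le> \<Phi> ((ys \<circ> rr) n)"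
    proof (intro exI allI impI)
      fix n
      have "n \<le> rr n" using seq_suble[OF rr] by simp
      hence a: "inverse (real (Suc (rr n))) \<le> inverse (real (Suc n))"
        by (intro le_imp_inverse_le) auto
      show "m - inverse (real (Suc n)) \<le> \<Phi> ((ys \<circ> rr) n)" using a ys(2)[of "rr n"] unfolding o_apply by linarith
    qed
  qed
  moreover have "\<Phi> y \<le> m" if "y \<in> S" "l2_norm y \<le> 1" for y
    unfolding m_def using that by (intro cSup_upper bda) (auto simp: K_def)
  ultimately show ?thesis using zS zn by force
qed

lemma l2_norm_scale:
  assumes "x \<in> l2"
  shows "l2_norm (\<lambda>n. a * x n) = cmod a * l2_norm x"
proof -
  have "(l2_norm (\<lambda>n. a * x n))\<^sup>2 = (\<Sum>n. (cmod a)\<^sup>2 * (cmod (x n))\<^sup>2)"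
    using l2_norm_sq[OF l2_scale[OF assms]] by (simp add: norm_mult power_mult_distrib)
  also have "\<dots> = (cmod a)\<^sup>2 * (l2_norm x)\<^sup>2"
    using assms by (simp add: suminf_mult l2_def l2_norm_sq)
  also have "\<dots> = (cmod a * l2_norm x)\<^sup>2" by (simp add: power_mult_distrib)
  finally have "(l2_norm (\<lambda>n. a * x n))\<^sup>2 = (cmod a * l2_norm x)\<^sup>2" .
  moreover have "l2_norm (\<lambda>n. a * x n) \<ge> 0" by (rule l2_norm_nonneg[OF l2_scale[OF assms]])
  moreover have "cmod a * l2_norm x \<ge> 0" using l2_norm_nonneg[OF assms] by simp
  ultimately show ?thesis using power2_eq_iff_nonneg by blast
qed

lemma unit_max:
  fixes S :: "(nat \<Rightarrow> complex) set" and \<Phi> :: "(nat \<Rightarrow> complex) \<Rightarrow> real"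
  assumes Sl2: "S \<subseteq> l2" and S0: "(\<lambda>_. 0) \<in> S"
    and Ssc: "\<And>x c. x \<in> S \<Longrightarrow> (\<lambda>n. complex_of_real c * x n) \<in> S"
    and cl: "\<And>xs z. wconv xs z \<Longrightarrow> (\<And>k. xs k \<in> S) \<Longrightarrow> z \<in> S"
    and ct: "\<And>xs z. wconv xs z \<Longrightarrow> (\<And>k. xs k \<in> S) \<Longrightarrow> (\<lambda>k. \<Phi> (xs k)) \<longlonglongrightarrow> \<Phi> z"
    and bd: "\<And>x. x \<in> S \<Longrightarrow> l2_norm x \<le> 1 \<Longrightarrow> \<Phi> x \<le> C"
    and nn: "\<And>x. x \<in> S \<Longrightarrow> \<Phi> x \<ge> 0"
    and hom: "\<And>x c. x \<in> S \<Longrightarrow> \<Phi> (\<lambda>n. complex_of_real c * x n) = c\<^sup>2 * \<Phi> x"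
    and unit: "\<exists>u\<in>S. l2_norm u = 1"
  shows "\<exists>x\<in>S. l2_norm x = 1 \<and> (\<forall>y\<in>S. \<Phi> y \<le> \<Phi> x * (l2_norm y)\<^sup>2)"
proof -
  obtain x0 where x0: "x0 \<in> S" "l2_norm x0 \<le> 1" and mx: "\<And>y. y \<in> S \<Longrightarrow> l2_norm y \<le> 1 \<Longrightarrow> \<Phi> y \<le> \<Phi> x0"
  proof -
    have "\<exists>x\<in>S. l2_norm x \<le> 1 \<and> (\<forall>y\<in>S. l2_norm y \<le> 1 \<longrightarrow> \<Phi> y \<le> \<Phi> x)"
      apply (rule exists_max[where \<Phi>=\<Phi> and C=C])
      apply (fact Sl2) apply (fact S0) apply (fact cl) apply (fact ct) apply (fact bd) done
    thus ?thesis using that by blast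
  qed
  have gen: "\<Phi> y \<le> \<Phi> x0 * (l2_norm y)\<^sup>2" if y: "y \<in> S" for y
  proof (cases "l2_norm y = 0")
    case True
    hence "y = (\<lambda>_. 0)" using norm_zero_imp y Sl2 by blast
    hence "\<Phi> y = 0" using hom[OF y, of 0] by simp
    thus ?thesis using True by simp
  next
    case False
    have yl2: "y \<in> l2" using y Sl2 by blast
    hence pos: "l2_norm y > 0" using False l2_norm_nonneg[OF yl2] by simp
    let ?y' = "\<lambda>n. complex_of_real (1 / l2_norm y) * y n"
    have "l2_norm ?y' = cmod (complex_of_real (1 / l2_norm y)) * l2_norm y" by (rule l2_norm_scale[OF yl2])
    also have "\<dots> = 1" using pos by (simp add: norm_divide)
    finally have "l2_norm ?y' = 1" .
    hence "\<Phi> ?y' \<le> \<Phi> x0" by (intro mx[OF Ssc[OF y]]) simp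
    moreover have "\<Phi> ?y' = (1 / l2_norm y)\<^sup>2 * \<Phi> y" by (rule hom[OF y])
    ultimately have "(1 / l2_norm y)\<^sup>2 * \<Phi> y \<le> \<Phi> x0" by linarith
    thus ?thesis using pos by (simp add: field_simps power2_eq_square)
  qed
  show ?thesis
  proof (cases "\<Phi> x0 > 0")
    case True
    have x0l2: "x0 \<in> l2" using x0 Sl2 by blast
    have "l2_norm x0 \<noteq> 0"
    proof
      assume "l2_norm x0 = 0"
      hence "x0 = (\<lambda>_. 0)" using norm_zero_imp x0l2 by blast
      hence "\<Phi> x0 = 0" using hom[OF x0(1), of 0] by simp
      thus False using True by simp
    qed
    hence pos: "l2_norm x0 > 0" using l2_norm_nonneg[OF x0l2] by simp
    have "l2_norm x0 = 1"
    proof (rule ccontr)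
      assume "l2_norm x0 \<noteq> 1"
      hence lt: "l2_norm x0 < 1" using x0(2) by simp
      let ?x' = "\<lambda>n. complex_of_real (1 / l2_norm x0) * x0 n"
      have "l2_norm ?x' = cmod (complex_of_real (1 / l2_norm x0)) * l2_norm x0" by (rule l2_norm_scale[OF x0l2])
      also have "\<dots> = 1" using pos by (simp add: norm_divide)
      finally have "l2_norm ?x' = 1" .
      hence "\<Phi> ?x' \<le> \<Phi> x0" by (intro mx[OF Ssc[OF x0(1)]]) simp
      moreover have "\<Phi> ?x' = (1 / l2_norm x0)\<^sup>2 * \<Phi> x0" by (rule hom[OF x0(1)])
      ultimately have "(1 / l2_norm x0)\<^sup>2 * \<Phi> x0 \<le> \<Phi> x0" by linarith
      moreover have "(1 / l2_norm x0)\<^sup>2 > 1" using pos lt by (simp add: power_less_one_iff field_simps)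
      ultimately show False using True mult_strict_right_mono[of 1 "(1 / l2_norm x0)\<^sup>2" "\<Phi> x0"] by linarith
    qed
    thus ?thesis using gen x0 by blast
  next
    case False
    hence z: "\<Phi> x0 = 0" using nn[OF x0(1)] by simp
    obtain u where u: "u \<in> S" "l2_norm u = 1" using unit by blast
    have "\<Phi> u = 0" using gen[OF u(1)] nn[OF u(1)] z by simp
    thus ?thesis using gen z u by auto
  qed
qed


lemma l2_sum:
  assumes "finite I" "\<And>m. m \<in> I \<Longrightarrow> f m \<in> l2"
  shows "(\<lambda>i. \<Sum>m\<in>I. f m i) \<in> l2"
  using assms
proof (induction I rule: finite_induct)
  case empty
  then show ?case using l2_zero by simp
next
  case (insert a I)
  have "(\<lambda>i. f a i + (\<Sum>m\<in>I. f m i)) \<in> l2"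
    using insert by (intro l2_add) auto
  thus ?case using insert by simp
qed

lemma inner_sum_left:
  assumes "finite I" "\<And>m. m \<in> I \<Longrightarrow> f m \<in> l2" "y \<in> l2"
  shows "l2_inner (\<lambda>i. \<Sum>m\<in>I. f m i) y = (\<Sum>m\<in>I. l2_inner (f m) y)"
  using assms
proof (induction I rule: finite_induct)
  case empty
  then show ?case by simp
next
  case (insert a I)
  have s: "(\<lambda>i. \<Sum>m\<in>I. f m i) \<in> l2" using insert by (intro l2_sum) auto
  have "l2_inner (\<lambda>i. \<Sum>m\<in>insert a I. f m i) y = l2_inner (\<lambda>i. 1 * f a i + 1 * (\<Sum>m\<in>I. f m i)) y"
    using insert by simp
  also have "\<dots> = l2_inner (f a) y + l2_inner (\<lambda>i. \<Sum>m\<in>I. f m i) y"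
    using inner_lin_left[OF _ s assms(3), of "f a" 1 1] insert by simp
  also have "\<dots> = (\<Sum>m\<in>insert a I. l2_inner (f m) y)" using insert by simp
  finally show ?case .
qed

lemma inner_sum_right:
  assumes "finite I" "\<And>m. m \<in> I \<Longrightarrow> f m \<in> l2" "y \<in> l2"
  shows "l2_inner y (\<lambda>i. \<Sum>m\<in>I. f m i) = (\<Sum>m\<in>I. l2_inner y (f m))"
proof -
  have s: "(\<lambda>i. \<Sum>m\<in>I. f m i) \<in> l2" using assms by (intro l2_sum) auto
  have "l2_inner y (\<lambda>i. \<Sum>m\<in>I. f m i) = cnj (l2_inner (\<lambda>i. \<Sum>m\<in>I. f m i) y)"
    using inner_cnj[OF s assms(3)] by simp
  also have "\<dots> = cnj (\<Sum>m\<in>I. l2_inner (f m) y)" using inner_sum_left[OF assms] by simp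
  also have "\<dots> = (\<Sum>m\<in>I. l2_inner y (f m))" using assms inner_cnj by simp
  finally show ?thesis .
qed

lemma inner_scale_left:
  assumes "x \<in> l2" "y \<in> l2"
  shows "l2_inner (\<lambda>i. a * x i) y = a * l2_inner x y"
  using inner_lin_left[OF assms(1) assms(1) assms(2), of a 0] by simp

lemma inner_scale_right:
  assumes "x \<in> l2" "y \<in> l2"
  shows "l2_inner y (\<lambda>i. a * x i) = cnj a * l2_inner y x"
  using inner_lin_right[OF assms(1) assms(1) assms(2), of a 0] by simp

lemma inner_diff_left:
  assumes "x \<in> l2" "y \<in> l2" "z \<in> l2"
  shows "l2_inner (\<lambda>i. x i - y i) z = l2_inner x z - l2_inner y z"
  using inner_lin_left[OF assms, of 1 "-1"] by simp

lemma inner_delta_left: "y \<in> l2 \<Longrightarrow> l2_inner (delta c) y = cnj (y c)"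
  using inner_cnj[OF _ l2_delta, of y c] inner_delta[of y c] by (metis complex_cnj_cnj)

definition ONS :: "(nat \<Rightarrow> nat \<Rightarrow> complex) \<Rightarrow> nat set \<Rightarrow> bool" where
  "ONS E I \<longleftrightarrow> (\<forall>m\<in>I. E m \<in> l2) \<and> (\<forall>m\<in>I. \<forall>m'\<in>I. l2_inner (E m) (E m') = (if m = m' then 1 else 0))"

lemma ONS_subset: "ONS E I \<Longrightarrow> J \<subseteq> I \<Longrightarrow> ONS E J"
  unfolding ONS_def by blast

lemma ONS_norm: "ONS E I \<Longrightarrow> m \<in> I \<Longrightarrow> l2_norm (E m) = 1"
proof -
  assume a: "ONS E I" "m \<in> I"
  hence l: "E m \<in> l2" and i: "l2_inner (E m) (E m) = 1" unfolding ONS_def by auto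
  have "complex_of_real ((l2_norm (E m))\<^sup>2) = 1" using inner_self[OF l] i by simp
  hence "(l2_norm (E m))\<^sup>2 = 1" using of_real_eq_1_iff by blast
  thus ?thesis using l2_norm_nonneg[OF l] by (auto simp: power2_eq_1_iff)
qed

lemma parseval_finite:
  assumes "finite I" "ONS E I"
  shows "l2_inner (\<lambda>i. \<Sum>m\<in>I. c m * E m i) (\<lambda>i. \<Sum>m\<in>I. c m * E m i) = (\<Sum>m\<in>I. complex_of_real ((cmod (c m))\<^sup>2))"
proof -
  have l: "\<And>m. m \<in> I \<Longrightarrow> E m \<in> l2" using assms(2) unfolding ONS_def by auto
  have sl: "\<And>m. m \<in> I \<Longrightarrow> (\<lambda>i. c m * E m i) \<in> l2" using l by (intro l2_scale)
  have u: "(\<lambda>i. \<Sum>m\<in>I. c m * E m i) \<in> l2" using assms(1) sl by (intro l2_sum)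
  have "l2_inner (\<lambda>i. \<Sum>m\<in>I. c m * E m i) (\<lambda>i. \<Sum>m\<in>I. c m * E m i)
      = (\<Sum>m\<in>I. l2_inner (\<lambda>i. c m * E m i) (\<lambda>i. \<Sum>m\<in>I. c m * E m i))"
    by (rule inner_sum_left[OF assms(1) sl u])
  also have "\<dots> = (\<Sum>m\<in>I. c m * (\<Sum>m'\<in>I. cnj (c m') * l2_inner (E m) (E m')))"
  proof (rule sum.cong[OF refl])
    fix m assume m: "m \<in> I"
    have "l2_inner (\<lambda>i. c m * E m i) (\<lambda>i. \<Sum>m\<in>I. c m * E m i) = c m * l2_inner (E m) (\<lambda>i. \<Sum>m\<in>I. c m * E m i)"
      by (rule inner_scale_left[OF l[OF m] u])
    also have "l2_inner (E m) (\<lambda>i. \<Sum>m\<in>I. c m * E m i) = (\<Sum>m'\<in>I. l2_inner (E m) (\<lambda>i. c m' * E m' i))"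
      by (rule inner_sum_right[OF assms(1) sl l[OF m]])
    also have "\<dots> = (\<Sum>m'\<in>I. cnj (c m') * l2_inner (E m) (E m'))"
      by (rule sum.cong[OF refl]) (rule inner_scale_right[OF l l[OF m]])
    finally show "l2_inner (\<lambda>i. c m * E m i) (\<lambda>i. \<Sum>m\<in>I. c m * E m i) = c m * (\<Sum>m'\<in>I. cnj (c m') * l2_inner (E m) (E m'))" .
  qed
  also have "\<dots> = (\<Sum>m\<in>I. c m * cnj (c m))"
  proof (rule sum.cong[OF refl])
    fix m assume m: "m \<in> I"
    have "(\<Sum>m'\<in>I. cnj (c m') * l2_inner (E m) (E m')) = (\<Sum>m'\<in>I. if m' = m then cnj (c m) else 0)"
      using assms(2) m unfolding ONS_def by (intro sum.cong) auto
    also have "\<dots> = cnj (c m)" using assms(1) m by (simp add: sum.delta')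
    finally show "c m * (\<Sum>m'\<in>I. cnj (c m') * l2_inner (E m) (E m')) = c m * cnj (c m)" by simp
  qed
  also have "\<dots> = (\<Sum>m\<in>I. complex_of_real ((cmod (c m))\<^sup>2))" by (simp only: complex_norm_square)
  finally show ?thesis .
qed

lemma bessel_finite:
  assumes "finite I" "ONS E I" "v \<in> l2"
  shows "(\<Sum>m\<in>I. (cmod (l2_inner v (E m)))\<^sup>2) \<le> (l2_norm v)\<^sup>2"
proof -
  define c where "c m = l2_inner v (E m)" for m
  define S where "S = (\<Sum>m\<in>I. (cmod (c m))\<^sup>2)"
  have l: "\<And>m. m \<in> I \<Longrightarrow> E m \<in> l2" using assms(2) unfolding ONS_def by auto
  have sl: "\<And>m. m \<in> I \<Longrightarrow> (\<lambda>i. c m * E m i) \<in> l2" using l by (intro l2_scale)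
  define u where "u = (\<lambda>i. \<Sum>m\<in>I. c m * E m i)"
  have u: "u \<in> l2" unfolding u_def using assms(1) sl by (intro l2_sum)
  have S0: "S \<ge> 0" unfolding S_def by (simp add: sum_nonneg)
  have nu: "(l2_norm u)\<^sup>2 = S"
  proof -
    have "complex_of_real ((l2_norm u)\<^sup>2) = complex_of_real S"
      using inner_self[OF u] parseval_finite[OF assms(1,2), of c] unfolding u_def S_def by simp
    thus ?thesis using of_real_eq_iff by blast
  qed
  have "l2_inner v u = (\<Sum>m\<in>I. l2_inner v (\<lambda>i. c m * E m i))"
    unfolding u_def by (rule inner_sum_right[OF assms(1) sl assms(3)])
  also have "\<dots> = (\<Sum>m\<in>I. cnj (c m) * c m)"
    by (rule sum.cong[OF refl]) (simp add: inner_scale_right[OF l assms(3)] c_def)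
  also have "\<dots> = (\<Sum>m\<in>I. c m * cnj (c m))" by (simp add: mult.commute)
  also have "\<dots> = complex_of_real S" unfolding S_def of_real_sum by (simp only: complex_norm_square)
  finally have vu: "l2_inner v u = complex_of_real S" .
  have "S \<le> l2_norm v * l2_norm u" using inner_bound[OF assms(3) u] vu S0 by simp
  also have "\<dots> = l2_norm v * sqrt S" using nu l2_norm_nonneg[OF u] by (metis real_sqrt_abs abs_of_nonneg)
  finally have le: "S \<le> l2_norm v * sqrt S" .
  have "S \<le> (l2_norm v)\<^sup>2"
  proof (cases "S = 0")
    case True then show ?thesis by simp
  next
    case False
    hence pos: "sqrt S > 0" using S0 by simp
    have "sqrt S * sqrt S \<le> l2_norm v * sqrt S" using le S0 by simp
    hence "sqrt S \<le> l2_norm v" using pos by (rule mult_right_le_imp_le)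
    hence "(sqrt S)\<^sup>2 \<le> (l2_norm v)\<^sup>2" using pos by (intro power_mono) auto
    thus ?thesis using S0 by simp
  qed
  thus ?thesis unfolding S_def c_def .
qed

definition Vs :: "(nat \<Rightarrow> nat \<Rightarrow> complex) \<Rightarrow> nat \<Rightarrow> (nat \<Rightarrow> complex) set" where
  "Vs E n = {x \<in> l2. \<forall>m<n. l2_inner x (E m) = 0}"

lemma unit_in_Vs:
  assumes on: "ONS E {..<n}"
  shows "\<exists>u\<in>Vs E n. l2_norm u = 1"
proof -
  have l: "\<And>m. m < n \<Longrightarrow> E m \<in> l2" using on unfolding ONS_def by auto
  define Q where "Q c = (\<lambda>i. delta c i - (\<Sum>m<n. cnj (E m c) * E m i))" for c
  have sl: "\<And>m. m \<in> {..<n} \<Longrightarrow> (\<lambda>i. cnj (E m c) * E m i) \<in> l2" for c using l by (auto intro: l2_scale)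
  have su: "(\<lambda>i. \<Sum>m<n. cnj (E m c) * E m i) \<in> l2" for c using sl by (intro l2_sum) auto
  have Ql2: "Q c \<in> l2" for c unfolding Q_def by (rule l2_diff[OF l2_delta su])
  have QV: "Q c \<in> Vs E n" for c
    unfolding Vs_def
  proof (intro CollectI conjI allI impI Ql2)
    fix m' assume m': "m' < n"
    have "l2_inner (Q c) (E m') = l2_inner (delta c) (E m') - l2_inner (\<lambda>i. \<Sum>m<n. cnj (E m c) * E m i) (E m')"
      unfolding Q_def by (rule inner_diff_left[OF l2_delta su l[OF m']])
    also have "l2_inner (delta c) (E m') = cnj (E m' c)" by (rule inner_delta_left[OF l[OF m']])
    also have "l2_inner (\<lambda>i. \<Sum>m<n. cnj (E m c) * E m i) (E m') = (\<Sum>m<n. l2_inner (\<lambda>i. cnj (E m c) * E m i) (E m'))"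
      by (rule inner_sum_left[OF _ sl l[OF m']]) simp
    also have "\<dots> = (\<Sum>m<n. cnj (E m c) * l2_inner (E m) (E m'))"
      by (rule sum.cong[OF refl]) (simp add: inner_scale_left[OF l l[OF m']])
    also have "\<dots> = (\<Sum>m<n. if m = m' then cnj (E m' c) else 0)"
      using on m' unfolding ONS_def by (intro sum.cong) auto
    also have "\<dots> = cnj (E m' c)" using m' by (simp add: sum.delta')
    finally show "l2_inner (Q c) (E m') = 0" by simp
  qed
  show ?thesis
  proof (cases "\<exists>c\<le>n. l2_norm (Q c) \<noteq> 0")
    case True
    then obtain c where c: "l2_norm (Q c) \<noteq> 0" by blast
    hence pos: "l2_norm (Q c) > 0" using l2_norm_nonneg[OF Ql2[of c]] by simp
    let ?u = "\<lambda>i. complex_of_real (1 / l2_norm (Q c)) * Q c i"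
    have "l2_norm ?u = cmod (complex_of_real (1 / l2_norm (Q c))) * l2_norm (Q c)"
      by (rule l2_norm_scale[OF Ql2])
    also have "\<dots> = 1" using pos by (simp add: norm_divide)
    finally have "l2_norm ?u = 1" .
    moreover have "?u \<in> Vs E n"
      unfolding Vs_def mem_Collect_eq
    proof (intro conjI allI impI)
      show "?u \<in> l2" by (rule l2_scale[OF Ql2])
      fix m assume m: "m < n"
      have "l2_inner ?u (E m) = complex_of_real (1 / l2_norm (Q c)) * l2_inner (Q c) (E m)"
        by (rule inner_scale_left[OF Ql2 l[OF m]])
      also have "l2_inner (Q c) (E m) = 0" using QV[of c] m unfolding Vs_def by blast
      finally show "l2_inner ?u (E m) = 0" by simp
    qed
    ultimately show ?thesis by blast
  next
    case False
    hence Q0: "Q c = (\<lambda>_. 0)" if "c \<le> n" for c using that norm_zero_imp[OF Ql2] by blast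
    have one: "(\<Sum>m<n. (cmod (E m c))\<^sup>2) = 1" if "c \<le> n" for c
    proof -
      have "Q c c = 0" using Q0[OF that] by simp
      hence "(\<Sum>m<n. cnj (E m c) * E m c) = 1" unfolding Q_def delta_def by simp
      hence "(\<Sum>m<n. E m c * cnj (E m c)) = 1" by (simp add: mult.commute)
      hence "(\<Sum>m<n. complex_of_real ((cmod (E m c))\<^sup>2)) = 1" by (simp only: complex_norm_square)
      hence "complex_of_real (\<Sum>m<n. (cmod (E m c))\<^sup>2) = 1" by simp
      thus ?thesis using of_real_eq_1_iff by blast
    qed
    have "real (Suc n) = (\<Sum>c\<le>n. \<Sum>m<n. (cmod (E m c))\<^sup>2)" using one by simp
    also have "\<dots> = (\<Sum>m<n. \<Sum>c\<le>n. (cmod (E m c))\<^sup>2)" by (rule sum.swap)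
    also have "\<dots> \<le> (\<Sum>m<n. 1)"
    proof (rule sum_mono)
      fix m assume m: "m \<in> {..<n}"
      have "(\<Sum>c\<le>n. (cmod (E m c))\<^sup>2) \<le> (\<Sum>c. (cmod (E m c))\<^sup>2)"
        using l[of m] m by (intro sum_le_suminf) (auto simp: l2_def)
      also have "\<dots> = (l2_norm (E m))\<^sup>2" using l2_norm_sq[OF l[of m]] m by simp
      also have "\<dots> = 1" using ONS_norm[OF on m] by simp
      finally show "(\<Sum>c\<le>n. (cmod (E m c))\<^sup>2) \<le> 1" .
    qed
    also have "\<dots> = real n" by simp
    finally show ?thesis by simp
  qed
qed


context absmat
begin

lemma MtMt: "absmat.Mt Mt = M"
  using absmat.Mt_def[OF absmat_Mt] by (simp add: fun_eq_iff Mt_def)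

lemma B_l2: "x \<in> l2 \<Longrightarrow> B x \<in> l2"
  by (rule absmat.A_l2(1)[OF absmat_Mt])

lemma B_adj:
  assumes "u \<in> l2" "y \<in> l2"
  shows "l2_inner (B u) y = l2_inner u (A y)"
  using absmat.adjoint_eq[OF absmat_Mt assms] MtMt by simp

lemma BA_inner:
  assumes "x \<in> l2" "y \<in> l2"
  shows "l2_inner (B (A x)) y = l2_inner (A x) (A y)"
  using B_adj[OF A_l2(1)[OF assms(1)] assms(2)] .

lemma double_bound:
  assumes w0: "\<And>i j. 0 \<le> w i j" and w1: "\<And>i j. w i j \<le> 1"
  shows "\<And>i. summable (\<lambda>j. norm (M i j) * w i j)"
    and "summable (\<lambda>i. \<Sum>j. norm (M i j) * w i j)"
    and "(\<Sum>i. \<Sum>j. norm (M i j) * w i j) \<le> RR"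
proof -
  have le: "norm (M i j) * w i j \<le> norm (M i j)" for i j using w1[of i j] by (simp add: mult_left_le)
  have nn: "0 \<le> norm (M i j) * w i j" for i j using w0[of i j] by simp
  show rs: "summable (\<lambda>j. norm (M i j) * w i j)" for i
    by (rule summable_comparison_test'[OF rows[of i]]) (use le nn in simp)
  have rle: "(\<Sum>j. norm (M i j) * w i j) \<le> r i" for i
    unfolding r_def by (rule suminf_le[OF le rs rows])
  have rnn: "0 \<le> (\<Sum>j. norm (M i j) * w i j)" for i by (rule suminf_nonneg[OF rs nn])
  show ss: "summable (\<lambda>i. \<Sum>j. norm (M i j) * w i j)"
    by (rule summable_comparison_test'[OF r_summable]) (use rle rnn in simp)
  show "(\<Sum>i. \<Sum>j. norm (M i j) * w i j) \<le> RR"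
    unfolding RR_def by (rule suminf_le[OF rle ss r_summable])
qed

lemma inner_A_bound:
  assumes e: "e \<in> l2" and f: "f \<in> l2" and e1: "\<And>j. cmod (e j) \<le> 1" and f1: "\<And>i. cmod (f i) \<le> 1"
  shows "cmod (l2_inner (A e) f) \<le> (\<Sum>i. \<Sum>j. norm (M i j) * (cmod (e j) * cmod (f i)))"
proof -
  have w0: "0 \<le> cmod (e j) * cmod (f i)" for i j by simp
  have w1: "cmod (e j) * cmod (f i) \<le> 1" for i j using e1[of j] f1[of i] by (simp add: mult_le_one)
  note db = double_bound[of "\<lambda>i j. cmod (e j) * cmod (f i)", OF w0 w1]
  have Ae: "A e \<in> l2" by (rule A_l2(1)[OF e])
  have "cmod (l2_inner (A e) f) \<le> (\<Sum>i. norm (A e i * cnj (f i)))"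
    unfolding l2_inner_def by (rule summable_norm[OF inner_summable(1)[OF Ae f]])
  also have "\<dots> \<le> (\<Sum>i. \<Sum>j. norm (M i j) * (cmod (e j) * cmod (f i)))"
  proof (rule suminf_le)
    show "summable (\<lambda>i. norm (A e i * cnj (f i)))" by (rule inner_summable(1)[OF Ae f])
    show "summable (\<lambda>i. \<Sum>j. norm (M i j) * (cmod (e j) * cmod (f i)))" by (rule db(2))
    fix i
    have "norm (A e i * cnj (f i)) = norm (A e i) * cmod (f i)" by (simp add: norm_mult)
    also have "norm (A e i) \<le> (\<Sum>j. norm (M i j * e j))"
      unfolding matrix_op_def by (rule summable_norm[OF row_norm_summable[OF e]])
    hence "norm (A e i) * cmod (f i) \<le> (\<Sum>j. norm (M i j * e j)) * cmod (f i)"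
      by (rule mult_right_mono) simp
    also have "\<dots> = (\<Sum>j. norm (M i j * e j) * cmod (f i))"
      using row_norm_summable[OF e] by (simp add: suminf_mult2)
    also have "\<dots> = (\<Sum>j. norm (M i j) * (cmod (e j) * cmod (f i)))" by (simp add: norm_mult mult_ac)
    finally show "norm (A e i * cnj (f i)) \<le> (\<Sum>j. norm (M i j) * (cmod (e j) * cmod (f i)))" .
  qed
  finally show ?thesis .
qed

lemma trace_bound:
  assumes on: "ONS E {..<n}"
    and eig: "\<And>m. m < n \<Longrightarrow> B (A (E m)) = (\<lambda>i. complex_of_real ((l2_norm (A (E m)))\<^sup>2) * E m i)"
  shows "(\<Sum>m<n. l2_norm (A (E m))) \<le> RR"
proof -
  define \<sigma> where "\<sigma> m = l2_norm (A (E m))" for m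
  define J where "J = {m. m < n \<and> \<sigma> m \<noteq> 0}"
  define f where "f m = (\<lambda>i. complex_of_real (1 / \<sigma> m) * A (E m) i)" for m
  have l: "\<And>m. m < n \<Longrightarrow> E m \<in> l2" using on unfolding ONS_def by auto
  have Al: "\<And>m. m < n \<Longrightarrow> A (E m) \<in> l2" using l A_l2(1) by blast
  have fl: "\<And>m. m < n \<Longrightarrow> f m \<in> l2" unfolding f_def using Al by (intro l2_scale)
  have fin: "finite J" unfolding J_def by simp
  have Jn: "J \<subseteq> {..<n}" unfolding J_def by auto
  have sig_nn: "\<sigma> m \<ge> 0" if "m < n" for m unfolding \<sigma>_def using l2_norm_nonneg[OF Al[OF that]] .
  have AA: "l2_inner (A (E m)) (A (E m')) = complex_of_real ((\<sigma> m)\<^sup>2) * l2_inner (E m) (E m')"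
    if "m < n" "m' < n" for m m'
  proof -
    have "l2_inner (A (E m)) (A (E m')) = l2_inner (B (A (E m))) (E m')"
      using BA_inner[OF l[OF that(1)] l[OF that(2)]] by simp
    also have "\<dots> = l2_inner (\<lambda>i. complex_of_real ((\<sigma> m)\<^sup>2) * E m i) (E m')"
      using eig[OF that(1)] unfolding \<sigma>_def by simp
    also have "\<dots> = complex_of_real ((\<sigma> m)\<^sup>2) * l2_inner (E m) (E m')"
      by (rule inner_scale_left[OF l[OF that(1)] l[OF that(2)]])
    finally show ?thesis .
  qed
  have onf: "ONS f J" unfolding ONS_def
  proof (intro conjI ballI)
    fix m assume "m \<in> J" thus "f m \<in> l2" using fl Jn by blast
  next
    fix m m' assume m: "m \<in> J" and m': "m' \<in> J"
    hence mn: "m < n" "m' < n" and s: "\<sigma> m \<noteq> 0" "\<sigma> m' \<noteq> 0" unfolding J_def by auto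
    have "l2_inner (f m) (f m') = complex_of_real (1 / \<sigma> m) * l2_inner (A (E m)) (f m')"
      unfolding f_def[of m] by (rule inner_scale_left[OF Al[OF mn(1)] fl[OF mn(2)]])
    also have "l2_inner (A (E m)) (f m') = cnj (complex_of_real (1 / \<sigma> m')) * l2_inner (A (E m)) (A (E m'))"
      unfolding f_def[of m'] by (rule inner_scale_right[OF Al[OF mn(2)] Al[OF mn(1)]])
    also have "l2_inner (A (E m)) (A (E m')) = complex_of_real ((\<sigma> m)\<^sup>2) * l2_inner (E m) (E m')"
      by (rule AA[OF mn])
    finally have eq: "l2_inner (f m) (f m') = complex_of_real (1 / \<sigma> m) * (complex_of_real (1 / \<sigma> m') * (complex_of_real ((\<sigma> m)\<^sup>2) * l2_inner (E m) (E m')))"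
      by simp
    show "l2_inner (f m) (f m') = (if m = m' then 1 else 0)"
    proof (cases "m = m'")
      case True
      have "l2_inner (E m) (E m') = 1" using on mn True unfolding ONS_def by auto
      thus ?thesis using eq True s by (simp add: power2_eq_square)
    next
      case False
      have "l2_inner (E m) (E m') = 0" using on mn False unfolding ONS_def by auto
      thus ?thesis using eq False by simp
    qed
  qed
  have sig_eq: "\<sigma> m = cmod (l2_inner (A (E m)) (f m))" if m: "m \<in> J" for m
  proof -
    have mn: "m < n" and s: "\<sigma> m \<noteq> 0" using m unfolding J_def by auto
    have "l2_inner (A (E m)) (f m) = cnj (complex_of_real (1 / \<sigma> m)) * l2_inner (A (E m)) (A (E m))"
      unfolding f_def by (rule inner_scale_right[OF Al[OF mn] Al[OF mn]])
    also have "l2_inner (A (E m)) (A (E m)) = complex_of_real ((\<sigma> m)\<^sup>2)"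
      unfolding \<sigma>_def by (rule inner_self[OF Al[OF mn]])
    finally have "l2_inner (A (E m)) (f m) = complex_of_real (\<sigma> m)" using s by (simp add: power2_eq_square)
    thus ?thesis using sig_nn[OF mn] by simp
  qed
  have E1: "cmod (E m j) \<le> 1" if "m < n" for m j
    using l2_coord_le[OF l[OF that], of j] ONS_norm[OF on, of m] that by simp
  have f1: "cmod (f m i) \<le> 1" if "m \<in> J" for m i
    using l2_coord_le[OF fl, of m i] ONS_norm[OF onf that] that Jn by auto
  have bes_E: "(\<Sum>m\<in>J. (cmod (E m j))\<^sup>2) \<le> 1" for j
  proof -
    have "(\<Sum>m\<in>J. (cmod (l2_inner (delta j) (E m)))\<^sup>2) \<le> (l2_norm (delta j))\<^sup>2"
      by (rule bessel_finite[OF fin ONS_subset[OF on Jn] l2_delta])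
    moreover have "cmod (l2_inner (delta j) (E m)) = cmod (E m j)" if "m \<in> J" for m
      using inner_delta_left[OF l, of m j] that Jn by auto
    ultimately show ?thesis by (simp add: norm_delta)
  qed
  have bes_f: "(\<Sum>m\<in>J. (cmod (f m i))\<^sup>2) \<le> 1" for i
  proof -
    have "(\<Sum>m\<in>J. (cmod (l2_inner (delta i) (f m)))\<^sup>2) \<le> (l2_norm (delta i))\<^sup>2"
      by (rule bessel_finite[OF fin onf l2_delta])
    moreover have "cmod (l2_inner (delta i) (f m)) = cmod (f m i)" if "m \<in> J" for m
      using inner_delta_left[OF fl, of m i] that Jn by auto
    ultimately show ?thesis by (simp add: norm_delta)
  qed
  define w where "w i j = (\<Sum>m\<in>J. cmod (E m j) * cmod (f m i))" for i j
  have w0: "0 \<le> w i j" for i j unfolding w_def by (simp add: sum_nonneg)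
  have w1: "w i j \<le> 1" for i j
  proof -
    have "w i j = (\<Sum>m\<in>J. \<bar>cmod (E m j)\<bar> * \<bar>cmod (f m i)\<bar>)" unfolding w_def by simp
    also have "\<dots> \<le> L2_set (\<lambda>m. cmod (E m j)) J * L2_set (\<lambda>m. cmod (f m i)) J" by (rule L2_set_mult_ineq)
    also have "\<dots> \<le> 1 * 1"
      unfolding L2_set_def using bes_E[of j] bes_f[of i]
      by (intro mult_mono) (simp_all add: sum_nonneg)
    finally show ?thesis by simp
  qed
  note db = double_bound[OF w0 w1]
  have "(\<Sum>m<n. \<sigma> m) = (\<Sum>m\<in>J. \<sigma> m)"
    by (rule sum.mono_neutral_right) (auto simp: J_def)
  also have "\<dots> \<le> (\<Sum>m\<in>J. \<Sum>i. \<Sum>j. norm (M i j) * (cmod (E m j) * cmod (f m i)))"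
  proof (rule sum_mono)
    fix m assume m: "m \<in> J"
    hence mn: "m < n" using Jn by auto
    show "\<sigma> m \<le> (\<Sum>i. \<Sum>j. norm (M i j) * (cmod (E m j) * cmod (f m i)))"
      unfolding sig_eq[OF m] by (rule inner_A_bound[OF l[OF mn] fl[OF mn] E1[OF mn] f1[OF m]])
  qed
  also have "\<dots> = (\<Sum>i. \<Sum>j. norm (M i j) * w i j)"
  proof -
    have w0m: "0 \<le> cmod (E m j) * cmod (f m i)" for m i j by simp
    have w1m: "cmod (E m j) * cmod (f m i) \<le> 1" if "m \<in> J" for m i j
      using E1[of m j] f1[OF that, of i] that Jn by (auto simp: mult_le_one)
    have "(\<Sum>m\<in>J. \<Sum>i. \<Sum>j. norm (M i j) * (cmod (E m j) * cmod (f m i)))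
        = (\<Sum>i. \<Sum>m\<in>J. \<Sum>j. norm (M i j) * (cmod (E m j) * cmod (f m i)))"
    proof (rule suminf_sum[symmetric])
      fix m assume "m \<in> J"
      from double_bound(2)[of "\<lambda>i j. cmod (E m j) * cmod (f m i)", OF w0m w1m[OF this]]
      show "summable (\<lambda>i. \<Sum>j. norm (M i j) * (cmod (E m j) * cmod (f m i)))" .
    qed
    also have "\<dots> = (\<Sum>i. \<Sum>j. \<Sum>m\<in>J. norm (M i j) * (cmod (E m j) * cmod (f m i)))"
    proof (rule suminf_cong, rule suminf_sum[symmetric])
      fix i m assume "m \<in> J"
      from double_bound(1)[of "\<lambda>i j. cmod (E m j) * cmod (f m i)", OF w0m w1m[OF this]]
      show "summable (\<lambda>j. norm (M i j) * (cmod (E m j) * cmod (f m i)))" .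
    qed
    also have "\<dots> = (\<Sum>i. \<Sum>j. norm (M i j) * w i j)"
      unfolding w_def by (simp add: sum_distrib_left)
    finally show ?thesis .
  qed
  also have "\<dots> \<le> RR" by (rule db(3))
  finally show ?thesis unfolding \<sigma>_def .
qed

end


lemma quad_zero:
  fixes a b :: real
  assumes h: "\<And>t. 2 * t * a + t\<^sup>2 * b \<le> 0"
  shows "a = 0"
proof (rule ccontr)
  assume "a \<noteq> 0"
  define t where "t = a / (\<bar>b\<bar> + 1)"
  have d: "\<bar>b\<bar> + 1 > 0" by simp
  have "t * a = a\<^sup>2 / (\<bar>b\<bar> + 1)" unfolding t_def by (simp add: power2_eq_square)
  moreover have "a\<^sup>2 > 0" using \<open>a \<noteq> 0\<close> by simp
  ultimately have "t * a > 0" using d by simp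
  moreover have "t\<^sup>2 * \<bar>b\<bar> \<le> t * a"
  proof -
    have "t\<^sup>2 * \<bar>b\<bar> = t * a * (\<bar>b\<bar> / (\<bar>b\<bar> + 1))" unfolding t_def by (simp add: power2_eq_square field_simps)
    also have "\<dots> \<le> t * a * 1" using \<open>t * a > 0\<close> d by (intro mult_left_mono) simp_all
    finally show ?thesis by simp
  qed
  moreover have "t\<^sup>2 * b \<ge> - (t\<^sup>2 * \<bar>b\<bar>)"
  proof -
    have "- \<bar>b\<bar> \<le> b" by arith
    hence "t\<^sup>2 * (- \<bar>b\<bar>) \<le> t\<^sup>2 * b" by (rule mult_left_mono) simp
    thus ?thesis by simp
  qed
  ultimately have "2 * t * a + t\<^sup>2 * b > 0" by linarith
  thus False using h[of t] by simp
qed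

lemma norm_sq_expand:
  assumes u: "u \<in> l2" and v: "v \<in> l2"
  shows "(l2_norm (\<lambda>i. u i + complex_of_real t * v i))\<^sup>2 = (l2_norm u)\<^sup>2 + 2 * t * Re (l2_inner u v) + t\<^sup>2 * (l2_norm v)\<^sup>2"
proof -
  let ?w = "\<lambda>i. u i + complex_of_real t * v i"
  have w: "?w \<in> l2" using l2_lincomb[OF u v, of 1 "complex_of_real t"] by simp
  have "l2_inner ?w ?w = l2_inner (\<lambda>i. 1 * u i + complex_of_real t * v i) ?w" by simp
  also have "\<dots> = l2_inner u ?w + complex_of_real t * l2_inner v ?w" using inner_lin_left[OF u v w, of 1 "complex_of_real t"] by simp
  also have "l2_inner u ?w = l2_inner u (\<lambda>i. 1 * u i + complex_of_real t * v i)" by simp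
  also have "\<dots> = l2_inner u u + complex_of_real t * l2_inner u v" using inner_lin_right[OF u v u, of 1 "complex_of_real t"] by simp
  also have "l2_inner v ?w = l2_inner v (\<lambda>i. 1 * u i + complex_of_real t * v i)" by simp
  also have "\<dots> = l2_inner v u + complex_of_real t * l2_inner v v" using inner_lin_right[OF u v v, of 1 "complex_of_real t"] by simp
  finally have eq: "l2_inner ?w ?w = l2_inner u u + complex_of_real t * l2_inner u v + complex_of_real t * (l2_inner v u + complex_of_real t * l2_inner v v)"
    by (simp add: algebra_simps)
  have "Re (l2_inner ?w ?w) = (l2_norm ?w)\<^sup>2" using inner_self[OF w] by simp
  moreover have "Re (l2_inner u u) = (l2_norm u)\<^sup>2" using inner_self[OF u] by simp
  moreover have "Re (l2_inner v v) = (l2_norm v)\<^sup>2" using inner_self[OF v] by simp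
  moreover have "Im (l2_inner v v) = 0" using inner_self[OF v] by simp
  moreover have "l2_inner v u = cnj (l2_inner u v)" using inner_cnj[OF u v] by simp
  ultimately show ?thesis using eq by (simp add: power2_eq_square algebra_simps)
qed

lemma cmod_sq_expand:
  "(cmod (a + complex_of_real t * b))\<^sup>2 = (cmod a)\<^sup>2 + 2 * t * Re (a * cnj b) + t\<^sup>2 * (cmod b)\<^sup>2"
  by (simp add: cmod_power2 power2_sum power_mult_distrib algebra_simps)

context absmat
begin

definition Ks :: "(nat \<Rightarrow> nat \<Rightarrow> complex) \<Rightarrow> nat \<Rightarrow> (nat \<Rightarrow> complex) set" where
  "Ks E n = {x \<in> Vs E n. A x = (\<lambda>_. 0)}"

lemma Vs_l2: "Vs E n \<subseteq> l2" unfolding Vs_def by blast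
lemma Ks_Vs: "Ks E n \<subseteq> Vs E n" unfolding Ks_def by blast
lemma Vs_zero: "(\<lambda>_. 0) \<in> Vs E n" unfolding Vs_def using l2_zero by simp
lemma Ks_zero: "(\<lambda>_. 0) \<in> Ks E n" unfolding Ks_def using Vs_zero A_zero by simp

lemma Vs_lin:
  assumes l: "\<And>m. m < n \<Longrightarrow> E m \<in> l2" and x: "x \<in> Vs E n" and y: "y \<in> Vs E n"
  shows "(\<lambda>i. a * x i + b * y i) \<in> Vs E n"
proof -
  have xl: "x \<in> l2" and yl: "y \<in> l2" using x y unfolding Vs_def by auto
  show ?thesis unfolding Vs_def mem_Collect_eq
  proof (intro conjI allI impI)
    show "(\<lambda>i. a * x i + b * y i) \<in> l2" by (rule l2_lincomb[OF xl yl])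
    fix m assume m: "m < n"
    have "l2_inner (\<lambda>i. a * x i + b * y i) (E m) = a * l2_inner x (E m) + b * l2_inner y (E m)"
      by (rule inner_lin_left[OF xl yl l[OF m]])
    thus "l2_inner (\<lambda>i. a * x i + b * y i) (E m) = 0" using x y m unfolding Vs_def by simp
  qed
qed

lemma Vs_scale:
  assumes l: "\<And>m. m < n \<Longrightarrow> E m \<in> l2" and x: "x \<in> Vs E n"
  shows "(\<lambda>i. a * x i) \<in> Vs E n"
  using Vs_lin[OF l x x, of a 0] by simp

lemma Ks_lin:
  assumes l: "\<And>m. m < n \<Longrightarrow> E m \<in> l2" and x: "x \<in> Ks E n" and y: "y \<in> Ks E n"
  shows "(\<lambda>i. a * x i + b * y i) \<in> Ks E n"
proof -
  have xv: "x \<in> Vs E n" and yv: "y \<in> Vs E n" and ax: "A x = (\<lambda>_. 0)" and ay: "A y = (\<lambda>_. 0)"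
    using x y unfolding Ks_def by auto
  have xl: "x \<in> l2" and yl: "y \<in> l2" using xv yv unfolding Vs_def by auto
  show ?thesis unfolding Ks_def mem_Collect_eq
    using Vs_lin[OF l xv yv] A_lin[OF xl yl, of a b] ax ay by simp
qed

lemma Ks_scale:
  assumes l: "\<And>m. m < n \<Longrightarrow> E m \<in> l2" and x: "x \<in> Ks E n"
  shows "(\<lambda>i. a * x i) \<in> Ks E n"
  using Ks_lin[OF l x x, of a 0] by simp

lemma Vs_closed:
  assumes l: "\<And>m. m < n \<Longrightarrow> E m \<in> l2" and w: "wconv xs z" and xs: "\<And>k. xs k \<in> Vs E n"
  shows "z \<in> Vs E n"
  unfolding Vs_def mem_Collect_eq
proof (intro conjI allI impI)
  show "z \<in> l2" using wconv_l2[OF w] by simp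
  fix m assume m: "m < n"
  have "(\<lambda>k. l2_inner (xs k) (E m)) \<longlonglongrightarrow> l2_inner z (E m)" by (rule wconv_inner[OF w l[OF m]])
  moreover have "(\<lambda>k. l2_inner (xs k) (E m)) = (\<lambda>k. 0)" using xs m unfolding Vs_def by auto
  ultimately show "l2_inner z (E m) = 0" using LIMSEQ_unique tendsto_const by metis
qed

lemma Ks_closed:
  assumes l: "\<And>m. m < n \<Longrightarrow> E m \<in> l2" and w: "wconv xs z" and xs: "\<And>k. xs k \<in> Ks E n"
  shows "z \<in> Ks E n"
proof -
  have xsV: "\<And>k. xs k \<in> Vs E n" using xs Ks_Vs by blast
  have "z \<in> Vs E n" by (rule Vs_closed[OF l w xsV])
  moreover have "A z = (\<lambda>_. 0)"
  proof
    fix i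
    have "(\<lambda>k. A (xs k) i) \<longlonglongrightarrow> A z i" by (rule A_wconv[OF w])
    moreover have "(\<lambda>k. A (xs k) i) = (\<lambda>k. 0)" using xs unfolding Ks_def by auto
    ultimately show "A z i = 0" using LIMSEQ_unique tendsto_const by metis
  qed
  ultimately show ?thesis unfolding Ks_def by simp
qed

lemma A_scale_norm:
  assumes "y \<in> l2"
  shows "(l2_norm (A (\<lambda>n. complex_of_real c * y n)))\<^sup>2 = c\<^sup>2 * (l2_norm (A y))\<^sup>2"
proof -
  have "A (\<lambda>n. complex_of_real c * y n) = (\<lambda>n. complex_of_real c * A y n)"
    using A_lin[OF assms assms, of "complex_of_real c" 0] by simp
  thus ?thesis using l2_norm_scale[OF A_l2(1)[OF assms], of "complex_of_real c"]
    by (simp add: power_mult_distrib)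
qed

lemma max_in_Vs:
  assumes on: "ONS E {..<n}"
  shows "\<exists>x\<in>Vs E n. l2_norm x = 1 \<and> (\<forall>y\<in>Vs E n. (l2_norm (A y))\<^sup>2 \<le> (l2_norm (A x))\<^sup>2 * (l2_norm y)\<^sup>2)"
proof -
  have l: "\<And>m. m < n \<Longrightarrow> E m \<in> l2" using on unfolding ONS_def by auto
  show ?thesis
  proof (rule unit_max[where S="Vs E n" and \<Phi>="\<lambda>y. (l2_norm (A y))\<^sup>2" and C="RR\<^sup>2"])
    show "Vs E n \<subseteq> l2" by (rule Vs_l2)
    show "(\<lambda>_. 0) \<in> Vs E n" by (rule Vs_zero)
    show "\<And>x c. x \<in> Vs E n \<Longrightarrow> (\<lambda>n. complex_of_real c * x n) \<in> Vs E n" by (rule Vs_scale[OF l])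
    show "\<And>xs z. wconv xs z \<Longrightarrow> (\<And>k. xs k \<in> Vs E n) \<Longrightarrow> z \<in> Vs E n" by (rule Vs_closed[OF l])
    show "\<And>xs z. wconv xs z \<Longrightarrow> (\<And>k. xs k \<in> Vs E n) \<Longrightarrow> (\<lambda>k. (l2_norm (A (xs k)))\<^sup>2) \<longlonglongrightarrow> (l2_norm (A z))\<^sup>2"
      by (rule A_wconv_norm)
    show "\<And>x. x \<in> Vs E n \<Longrightarrow> l2_norm x \<le> 1 \<Longrightarrow> (l2_norm (A x))\<^sup>2 \<le> RR\<^sup>2"
    proof -
      fix x assume x: "x \<in> Vs E n" "l2_norm x \<le> 1"
      hence xl: "x \<in> l2" using Vs_l2 by blast
      have "(l2_norm x)\<^sup>2 \<le> 1" using x(2) l2_norm_nonneg[OF xl] by (simp add: power_le_one)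
      hence "RR\<^sup>2 * (l2_norm x)\<^sup>2 \<le> RR\<^sup>2" by (simp add: mult_left_le)
      thus "(l2_norm (A x))\<^sup>2 \<le> RR\<^sup>2" using A_l2(2)[OF xl] by linarith
    qed
    show "\<And>x. x \<in> Vs E n \<Longrightarrow> 0 \<le> (l2_norm (A x))\<^sup>2" by simp
    show "\<And>x c. x \<in> Vs E n \<Longrightarrow> (l2_norm (A (\<lambda>n. complex_of_real c * x n)))\<^sup>2 = c\<^sup>2 * (l2_norm (A x))\<^sup>2"
      by (rule A_scale_norm) (use Vs_l2 in blast)
    show "\<exists>u\<in>Vs E n. l2_norm u = 1" by (rule unit_in_Vs[OF on])
  qed
qed

end


context absmat
begin

definition eigs :: "(nat \<Rightarrow> nat \<Rightarrow> complex) \<Rightarrow> nat \<Rightarrow> bool" where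
  "eigs E n \<longleftrightarrow> (\<forall>m<n. B (A (E m)) = (\<lambda>i. complex_of_real ((l2_norm (A (E m)))\<^sup>2) * E m i))"

lemma eig_from_max:
  assumes on: "ONS E {..<n}" and eg: "eigs E n"
    and x: "x \<in> Vs E n" and nx: "l2_norm x = 1"
    and mx: "\<And>y. y \<in> Vs E n \<Longrightarrow> (l2_norm (A y))\<^sup>2 \<le> (l2_norm (A x))\<^sup>2 * (l2_norm y)\<^sup>2"
  shows "B (A x) = (\<lambda>i. complex_of_real ((l2_norm (A x))\<^sup>2) * x i)"
proof -
  define m where "m = (l2_norm (A x))\<^sup>2"
  have l: "\<And>k. k < n \<Longrightarrow> E k \<in> l2" using on unfolding ONS_def by auto
  have xl: "x \<in> l2" using x Vs_l2 by blast
  have Axl: "A x \<in> l2" by (rule A_l2(1)[OF xl])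
  have re: "Re (l2_inner (A x) (A y)) = m * Re (l2_inner x y)" if y: "y \<in> Vs E n" for y
  proof -
    have yl: "y \<in> l2" using y Vs_l2 by blast
    have Ayl: "A y \<in> l2" by (rule A_l2(1)[OF yl])
    have "Re (l2_inner (A x) (A y)) - m * Re (l2_inner x y) = 0"
    proof (rule quad_zero)
      fix t :: real
      let ?z = "\<lambda>i. x i + complex_of_real t * y i"
      have zV: "?z \<in> Vs E n" using Vs_lin[OF l x y, of 1 "complex_of_real t"] by simp
      have Az: "A ?z = (\<lambda>i. A x i + complex_of_real t * A y i)"
        using A_lin[OF xl yl, of 1 "complex_of_real t"] by simp
      have "(l2_norm (A ?z))\<^sup>2 \<le> m * (l2_norm ?z)\<^sup>2" using mx[OF zV] unfolding m_def .
      moreover have "(l2_norm (A ?z))\<^sup>2 = m + 2 * t * Re (l2_inner (A x) (A y)) + t\<^sup>2 * (l2_norm (A y))\<^sup>2"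
        unfolding Az m_def by (rule norm_sq_expand[OF Axl Ayl])
      moreover have "(l2_norm ?z)\<^sup>2 = 1 + 2 * t * Re (l2_inner x y) + t\<^sup>2 * (l2_norm y)\<^sup>2"
        using norm_sq_expand[OF xl yl, of t] nx by simp
      moreover have "(l2_norm (A y))\<^sup>2 \<le> m * (l2_norm y)\<^sup>2" using mx[OF y] unfolding m_def .
      ultimately show "2 * t * (Re (l2_inner (A x) (A y)) - m * Re (l2_inner x y)) + t\<^sup>2 * ((l2_norm (A y))\<^sup>2 - m * (l2_norm y)\<^sup>2) \<le> 0"
        by (simp add: algebra_simps)
    qed
    thus ?thesis by simp
  qed
  have key: "l2_inner (A x) (A y) = complex_of_real m * l2_inner x y" if y: "y \<in> Vs E n" for y
  proof -
    have yl: "y \<in> l2" using y Vs_l2 by blast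
    let ?y' = "\<lambda>i. \<i> * y i"
    have y'V: "?y' \<in> Vs E n" by (rule Vs_scale[OF l y])
    have Ay': "A ?y' = (\<lambda>i. \<i> * A y i)" using A_lin[OF yl yl, of \<i> 0] by simp
    have "l2_inner (A x) (A ?y') = - \<i> * l2_inner (A x) (A y)"
      unfolding Ay' using inner_scale_right[OF A_l2(1)[OF yl] Axl, of \<i>] by simp
    moreover have "l2_inner x ?y' = - \<i> * l2_inner x y" using inner_scale_right[OF yl xl, of \<i>] by simp
    ultimately have "Im (l2_inner (A x) (A y)) = m * Im (l2_inner x y)" using re[OF y'V] by simp
    thus ?thesis using re[OF y] by (simp add: complex_eq_iff)
  qed
  define z where "z = (\<lambda>i. B (A x) i - complex_of_real m * x i)"
  have BAxl: "B (A x) \<in> l2" by (rule B_l2[OF Axl])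
  have zl: "z \<in> l2" unfolding z_def by (rule l2_diff[OF BAxl l2_scale[OF xl]])
  have zinner: "l2_inner z y = 0" if y: "y \<in> Vs E n" for y
  proof -
    have yl: "y \<in> l2" using y Vs_l2 by blast
    have "l2_inner z y = l2_inner (B (A x)) y - l2_inner (\<lambda>i. complex_of_real m * x i) y"
      unfolding z_def by (rule inner_diff_left[OF BAxl l2_scale[OF xl] yl])
    also have "\<dots> = l2_inner (A x) (A y) - complex_of_real m * l2_inner x y"
      using BA_inner[OF xl yl] inner_scale_left[OF xl yl] by simp
    finally show ?thesis using key[OF y] by simp
  qed
  have zV: "z \<in> Vs E n" unfolding Vs_def mem_Collect_eq
  proof (intro conjI allI impI zl)
    fix k assume k: "k < n"
    have xk: "l2_inner x (E k) = 0" using x k unfolding Vs_def by blast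
    have "l2_inner (E k) x = 0" using inner_cnj[OF xl l[OF k]] xk by simp
    have "l2_inner z (E k) = l2_inner (B (A x)) (E k) - l2_inner (\<lambda>i. complex_of_real m * x i) (E k)"
      unfolding z_def by (rule inner_diff_left[OF BAxl l2_scale[OF xl] l[OF k]])
    also have "l2_inner (\<lambda>i. complex_of_real m * x i) (E k) = 0"
      using inner_scale_left[OF xl l[OF k]] xk by simp
    also have "l2_inner (B (A x)) (E k) = l2_inner (A x) (A (E k))" by (rule BA_inner[OF xl l[OF k]])
    also have "\<dots> = cnj (l2_inner (A (E k)) (A x))" using inner_cnj[OF A_l2(1)[OF l[OF k]] Axl] by simp
    also have "l2_inner (A (E k)) (A x) = l2_inner (B (A (E k))) x" using BA_inner[OF l[OF k] xl] by simp
    also have "\<dots> = l2_inner (\<lambda>i. complex_of_real ((l2_norm (A (E k)))\<^sup>2) * E k i) x"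
      using eg k unfolding eigs_def by simp
    also have "\<dots> = complex_of_real ((l2_norm (A (E k)))\<^sup>2) * l2_inner (E k) x"
      by (rule inner_scale_left[OF l[OF k] xl])
    finally show "l2_inner z (E k) = 0" using \<open>l2_inner (E k) x = 0\<close> by simp
  qed
  have "z = (\<lambda>_. 0)" using inner_self_zero_imp[OF zl zinner[OF zV]] .
  thus ?thesis unfolding z_def m_def by (simp add: fun_eq_iff)
qed

lemma odd_step:
  assumes on: "ONS E {..<n}" and ex: "\<exists>c. \<exists>y\<in>Ks E n. y c \<noteq> 0"
  shows "\<exists>x\<in>Ks E n. l2_norm x = 1 \<and> (\<forall>y\<in>Ks E n. l2_inner y x = 0 \<longrightarrow> y (LEAST c. \<exists>y\<in>Ks E n. y c \<noteq> 0) = 0)"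
proof -
  define c0 where "c0 = (LEAST c. \<exists>y\<in>Ks E n. y c \<noteq> 0)"
  have l: "\<And>k. k < n \<Longrightarrow> E k \<in> l2" using on unfolding ONS_def by auto
  have Kl2: "Ks E n \<subseteq> l2" using Ks_Vs Vs_l2 by blast
  obtain y0 where y0: "y0 \<in> Ks E n" "y0 c0 \<noteq> 0"
    using LeastI_ex[OF ex] unfolding c0_def by blast
  have y0l: "y0 \<in> l2" using y0 Kl2 by blast
  have "\<exists>x\<in>Ks E n. l2_norm x = 1 \<and> (\<forall>y\<in>Ks E n. (cmod (y c0))\<^sup>2 \<le> (cmod (x c0))\<^sup>2 * (l2_norm y)\<^sup>2)"
  proof (rule unit_max[where S="Ks E n" and \<Phi>="\<lambda>y. (cmod (y c0))\<^sup>2" and C=1])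
    show "Ks E n \<subseteq> l2" by (rule Kl2)
    show "(\<lambda>_. 0) \<in> Ks E n" by (rule Ks_zero)
    show "\<And>x c. x \<in> Ks E n \<Longrightarrow> (\<lambda>n. complex_of_real c * x n) \<in> Ks E n" by (rule Ks_scale[OF l])
    show "\<And>xs z. wconv xs z \<Longrightarrow> (\<And>k. xs k \<in> Ks E n) \<Longrightarrow> z \<in> Ks E n" by (rule Ks_closed[OF l])
    show "(\<lambda>k. (cmod (xs k c0))\<^sup>2) \<longlonglongrightarrow> (cmod (z c0))\<^sup>2" if "wconv xs z" for xs z
      using that unfolding wconv_def by (intro tendsto_power tendsto_norm) blast
    show "(cmod (x c0))\<^sup>2 \<le> 1" if "x \<in> Ks E n" "l2_norm x \<le> 1" for x
    proof -
      have xl: "x \<in> l2" using that Kl2 by blast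
      have "(cmod (x c0))\<^sup>2 \<le> (l2_norm x)\<^sup>2" by (rule l2_coord_sq_le[OF xl])
      also have "\<dots> \<le> 1" using that l2_norm_nonneg[OF xl] by (simp add: power_le_one)
      finally show ?thesis .
    qed
    show "\<And>x. x \<in> Ks E n \<Longrightarrow> 0 \<le> (cmod (x c0))\<^sup>2" by simp
    show "\<And>x c. x \<in> Ks E n \<Longrightarrow> (cmod (complex_of_real c * x c0))\<^sup>2 = c\<^sup>2 * (cmod (x c0))\<^sup>2"
      by (simp add: norm_mult power_mult_distrib)
    have pos: "l2_norm y0 > 0"
    proof -
      have "l2_norm y0 \<noteq> 0"
      proof
        assume "l2_norm y0 = 0"
        hence "y0 = (\<lambda>_. 0)" by (rule norm_zero_imp[OF y0l])
        thus False using y0(2) by simp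
      qed
      thus ?thesis using l2_norm_nonneg[OF y0l] by simp
    qed
    let ?u = "\<lambda>i. complex_of_real (1 / l2_norm y0) * y0 i"
    have "l2_norm ?u = cmod (complex_of_real (1 / l2_norm y0)) * l2_norm y0" by (rule l2_norm_scale[OF y0l])
    also have "\<dots> = 1" using pos by (simp add: norm_divide)
    finally have "l2_norm ?u = 1" .
    moreover have "?u \<in> Ks E n" by (rule Ks_scale[OF l y0(1)])
    ultimately show "\<exists>u\<in>Ks E n. l2_norm u = 1" by blast
  qed
  then obtain x where x: "x \<in> Ks E n" "l2_norm x = 1"
    and mx: "\<And>y. y \<in> Ks E n \<Longrightarrow> (cmod (y c0))\<^sup>2 \<le> (cmod (x c0))\<^sup>2 * (l2_norm y)\<^sup>2" by blast
  have xl: "x \<in> l2" using x Kl2 by blast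
  have xc0: "x c0 \<noteq> 0"
  proof
    assume "x c0 = 0"
    hence "(cmod (y0 c0))\<^sup>2 \<le> 0" using mx[OF y0(1)] by simp
    thus False using y0(2) by simp
  qed
  have re: "Re (x c0 * cnj (y c0)) = 0" if y: "y \<in> Ks E n" "l2_inner y x = 0" for y
  proof -
    have yl: "y \<in> l2" using y Kl2 by blast
    have rxy: "Re (l2_inner x y) = 0" using inner_cnj[OF yl xl] y(2) by (metis complex_cnj_zero zero_complex.simps(1))
    show ?thesis
    proof (rule quad_zero)
      fix t :: real
      let ?z = "\<lambda>i. x i + complex_of_real t * y i"
      have zK: "?z \<in> Ks E n" using Ks_lin[OF l x(1) y(1), of 1 "complex_of_real t"] by simp
      have "(cmod (?z c0))\<^sup>2 \<le> (cmod (x c0))\<^sup>2 * (l2_norm ?z)\<^sup>2" by (rule mx[OF zK])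
      moreover have "(l2_norm ?z)\<^sup>2 = 1 + t\<^sup>2 * (l2_norm y)\<^sup>2"
        using norm_sq_expand[OF xl yl, of t] x(2) rxy by simp
      moreover have "(cmod (?z c0))\<^sup>2 = (cmod (x c0))\<^sup>2 + 2 * t * Re (x c0 * cnj (y c0)) + t\<^sup>2 * (cmod (y c0))\<^sup>2"
        by (rule cmod_sq_expand)
      moreover have "(cmod (y c0))\<^sup>2 \<le> (cmod (x c0))\<^sup>2 * (l2_norm y)\<^sup>2" by (rule mx[OF y(1)])
      ultimately show "2 * t * Re (x c0 * cnj (y c0)) + t\<^sup>2 * ((cmod (y c0))\<^sup>2 - (cmod (x c0))\<^sup>2 * (l2_norm y)\<^sup>2) \<le> 0"
        by (simp add: algebra_simps)
    qed
  qed
  have "y c0 = 0" if y: "y \<in> Ks E n" "l2_inner y x = 0" for y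
  proof -
    have yl: "y \<in> l2" using y Kl2 by blast
    let ?y' = "\<lambda>i. \<i> * y i"
    have y'K: "?y' \<in> Ks E n" by (rule Ks_scale[OF l y(1)])
    have "l2_inner ?y' x = \<i> * l2_inner y x" by (rule inner_scale_left[OF yl xl])
    hence "l2_inner ?y' x = 0" using y(2) by simp
    hence "Re (x c0 * cnj (\<i> * y c0)) = 0" using re[OF y'K] by simp
    hence "Im (x c0 * cnj (y c0)) = 0" by simp
    hence "x c0 * cnj (y c0) = 0" using re[OF y] by (simp add: complex_eq_iff)
    thus ?thesis using xc0 by simp
  qed
  thus ?thesis using x unfolding c0_def by blast
qed

definition good :: "(nat \<Rightarrow> nat \<Rightarrow> complex) \<Rightarrow> nat \<Rightarrow> (nat \<Rightarrow> complex) \<Rightarrow> bool" where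
  "good E n x \<longleftrightarrow> x \<in> Vs E n \<and> l2_norm x = 1 \<and>
     B (A x) = (\<lambda>i. complex_of_real ((l2_norm (A x))\<^sup>2) * x i) \<and>
     (even n \<longrightarrow> (\<forall>y\<in>Vs E n. (l2_norm (A y))\<^sup>2 \<le> (l2_norm (A x))\<^sup>2 * (l2_norm y)\<^sup>2)) \<and>
     (odd n \<longrightarrow> (\<exists>c. \<exists>y\<in>Ks E n. y c \<noteq> 0) \<longrightarrow>
        x \<in> Ks E n \<and> (\<forall>y\<in>Ks E n. l2_inner y x = 0 \<longrightarrow> y (LEAST c. \<exists>y\<in>Ks E n. y c \<noteq> 0) = 0))"

lemma good_exists:
  assumes on: "ONS E {..<n}" and eg: "eigs E n"
  shows "\<exists>x. good E n x"
proof (cases "odd n \<and> (\<exists>c. \<exists>y\<in>Ks E n. y c \<noteq> 0)")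
  case True
  then obtain x where x: "x \<in> Ks E n" "l2_norm x = 1"
    and cov: "\<forall>y\<in>Ks E n. l2_inner y x = 0 \<longrightarrow> y (LEAST c. \<exists>y\<in>Ks E n. y c \<noteq> 0) = 0"
    using odd_step[OF on] by blast
  have xV: "x \<in> Vs E n" using x Ks_Vs by blast
  have Ax: "A x = (\<lambda>_. 0)" using x unfolding Ks_def by simp
  have "B (A x) = (\<lambda>i. complex_of_real ((l2_norm (A x))\<^sup>2) * x i)"
    unfolding Ax using absmat.A_zero[OF absmat_Mt] by simp
  thus ?thesis unfolding good_def using True xV x cov by blast
next
  case False
  obtain x where x: "x \<in> Vs E n" "l2_norm x = 1"
    and mx: "\<forall>y\<in>Vs E n. (l2_norm (A y))\<^sup>2 \<le> (l2_norm (A x))\<^sup>2 * (l2_norm y)\<^sup>2"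
    using max_in_Vs[OF on] by blast
  have "B (A x) = (\<lambda>i. complex_of_real ((l2_norm (A x))\<^sup>2) * x i)"
    by (rule eig_from_max[OF on eg x]) (use mx in blast)
  thus ?thesis unfolding good_def using False x mx by blast
qed

end


context absmat
begin

primrec seqE :: "nat \<Rightarrow> nat \<Rightarrow> nat \<Rightarrow> complex" where
  "seqE 0 = (\<lambda>_ _. 0)"
| "seqE (Suc n) = (seqE n)(n := (SOME x. good (seqE n) n x))"

definition ev :: "nat \<Rightarrow> nat \<Rightarrow> complex" where "ev n = seqE (Suc n) n"

lemma seqE_stable: "m < k \<Longrightarrow> seqE k m = ev m"
proof (induction k)
  case 0 then show ?case by simp
next
  case (Suc k)
  show ?case
  proof (cases "m = k")
    case True then show ?thesis unfolding ev_def by simp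
  next
    case False
    hence "m < k" using Suc.prems by simp
    thus ?thesis using Suc.IH False by simp
  qed
qed

lemma Vs_cong: "(\<And>m. m < n \<Longrightarrow> E m = E' m) \<Longrightarrow> Vs E n = Vs E' n"
  unfolding Vs_def by (metis (no_types, lifting))

lemma Ks_cong: "(\<And>m. m < n \<Longrightarrow> E m = E' m) \<Longrightarrow> Ks E n = Ks E' n"
proof -
  assume h: "\<And>m. m < n \<Longrightarrow> E m = E' m"
  have "Vs E n = Vs E' n" by (rule Vs_cong[OF h])
  thus ?thesis unfolding Ks_def by simp
qed

lemma good_cong: "(\<And>m. m < n \<Longrightarrow> E m = E' m) \<Longrightarrow> good E n x = good E' n x"
proof -
  assume h: "\<And>m. m < n \<Longrightarrow> E m = E' m"
  have "Vs E n = Vs E' n" by (rule Vs_cong[OF h])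
  moreover have "Ks E n = Ks E' n" by (rule Ks_cong[OF h])
  ultimately show ?thesis unfolding good_def by simp
qed

lemma good_seq: "good (seqE n) n x = good ev n x"
  by (rule good_cong) (rule seqE_stable)

lemma construction:
  "ONS ev {..<n} \<and> eigs ev n \<and> (\<forall>m<n. good ev m (ev m))"
proof (induction n)
  case 0
  then show ?case unfolding ONS_def eigs_def by simp
next
  case (Suc n)
  have on: "ONS ev {..<n}" and eg: "eigs ev n" and gd: "\<forall>m<n. good ev m (ev m)" using Suc.IH by auto
  obtain x where "good ev n x" using good_exists[OF on eg] by blast
  hence "good (seqE n) n x" using good_seq by simp
  hence "good (seqE n) n (SOME x. good (seqE n) n x)" by (rule someI[of "\<lambda>x. good (seqE n) n x"])
  moreover have "ev n = (SOME x. good (seqE n) n x)" by (simp add: ev_def)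
  ultimately have "good (seqE n) n (ev n)" by simp
  hence g: "good ev n (ev n)" using good_seq by simp
  have l: "\<And>m. m < n \<Longrightarrow> ev m \<in> l2" using on unfolding ONS_def by auto
  have V: "ev n \<in> Vs ev n" and nn: "l2_norm (ev n) = 1"
    and eign: "B (A (ev n)) = (\<lambda>i. complex_of_real ((l2_norm (A (ev n)))\<^sup>2) * ev n i)"
    using g unfolding good_def by auto
  have evl: "ev n \<in> l2" using V Vs_l2 by blast
  have orth: "l2_inner (ev n) (ev m) = 0" if "m < n" for m using V that unfolding Vs_def by blast
  have orth2: "l2_inner (ev m) (ev n) = 0" if "m < n" for m
    using inner_cnj[OF evl l[OF that]] orth[OF that] by simp
  have self: "l2_inner (ev n) (ev n) = 1" using inner_self[OF evl] nn by simp
  have "ONS ev {..<Suc n}"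
    unfolding ONS_def
  proof (intro conjI ballI)
    fix m assume "m \<in> {..<Suc n}"
    thus "ev m \<in> l2" using l evl by (cases "m = n") simp_all
  next
    fix m m' assume m: "m \<in> {..<Suc n}" and m': "m' \<in> {..<Suc n}"
    show "l2_inner (ev m) (ev m') = (if m = m' then 1 else 0)"
    proof (cases "m = n")
      case True
      show ?thesis
      proof (cases "m' = n")
        case True then show ?thesis using \<open>m = n\<close> self by simp
      next
        case False then show ?thesis using \<open>m = n\<close> m' orth by simp
      qed
    next
      case False
      hence mn: "m < n" using m by simp
      show ?thesis
      proof (cases "m' = n")
        case True then show ?thesis using mn orth2 by simp
      next
        case False
        hence "m' < n" using m' by simp
        thus ?thesis using on mn unfolding ONS_def by auto
      qed
    qed
  qed
  moreover have "eigs ev (Suc n)" unfolding eigs_def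
  proof (intro allI impI)
    fix m assume "m < Suc n"
    thus "B (A (ev m)) = (\<lambda>i. complex_of_real ((l2_norm (A (ev m)))\<^sup>2) * ev m i)"
      using eg eign unfolding eigs_def by (cases "m = n") simp_all
  qed
  moreover have "\<forall>m<Suc n. good ev m (ev m)"
  proof (intro allI impI)
    fix m assume "m < Suc n"
    thus "good ev m (ev m)" using gd g by (cases "m = n") simp_all
  qed
  ultimately show ?case by blast
qed

lemma ev_good: "good ev n (ev n)"
  using construction[of "Suc n"] by simp

lemma ev_ONS: "ONS ev {..<n}"
  using construction by blast

lemma ev_l2: "ev n \<in> l2"
  using ev_ONS[of "Suc n"] unfolding ONS_def by simp

lemma ev_orth: "l2_inner (ev m) (ev n) = (if m = n then 1 else 0)"
  using ev_ONS[of "Suc (max m n)"] unfolding ONS_def by (simp add: less_Suc_eq_le)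

lemma ev_eig: "B (A (ev n)) = (\<lambda>i. complex_of_real ((l2_norm (A (ev n)))\<^sup>2) * ev n i)"
  using ev_good[of n] unfolding good_def by blast

lemma sigma_summable: "summable (\<lambda>n. l2_norm (A (ev n)))"
proof (rule bounded_imp_summable)
  show "0 \<le> l2_norm (A (ev n))" for n by (rule l2_norm_nonneg[OF A_l2(1)[OF ev_l2]])
  fix n
  have "(\<Sum>k\<le>n. l2_norm (A (ev k))) = (\<Sum>k<Suc n. l2_norm (A (ev k)))" by (simp add: lessThan_Suc_atMost)
  also have "\<dots> \<le> RR"
    by (rule trace_bound[OF ev_ONS]) (rule ev_eig)
  finally show "(\<Sum>k\<le>n. l2_norm (A (ev k))) \<le> RR" .
qed

lemma Ks_mono: "n \<le> n' \<Longrightarrow> Ks ev n' \<subseteq> Ks ev n"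
  unfolding Ks_def Vs_def by auto

lemma ev_complete:
  assumes x: "x \<in> l2" and orth: "\<And>n. l2_inner x (ev n) = 0"
  shows "x = (\<lambda>_. 0)"
proof -
  have xV: "x \<in> Vs ev n" for n unfolding Vs_def using x orth by blast
  have Axl: "A x \<in> l2" by (rule A_l2(1)[OF x])
  have bnd: "(l2_norm (A x))\<^sup>2 \<le> (l2_norm (A (ev (2 * k))))\<^sup>2 * (l2_norm x)\<^sup>2" for k
    using ev_good[of "2 * k"] xV[of "2 * k"] unfolding good_def by auto
  have lim0: "(\<lambda>k. (l2_norm (A (ev (2 * k))))\<^sup>2 * (l2_norm x)\<^sup>2) \<longlonglongrightarrow> 0"
  proof -
    have "(\<lambda>n. l2_norm (A (ev n))) \<longlonglongrightarrow> 0" by (rule summable_LIMSEQ_zero[OF sigma_summable])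
    hence "(\<lambda>k. l2_norm (A (ev (2 * k)))) \<longlonglongrightarrow> 0"
      by (rule LIMSEQ_subseq_LIMSEQ[unfolded o_def]) (simp add: strict_mono_def)
    hence "(\<lambda>k. (l2_norm (A (ev (2 * k))))\<^sup>2 * (l2_norm x)\<^sup>2) \<longlonglongrightarrow> 0\<^sup>2 * (l2_norm x)\<^sup>2"
      by (intro tendsto_mult tendsto_power tendsto_const)
    thus ?thesis by simp
  qed
  have "(l2_norm (A x))\<^sup>2 \<le> 0"
    by (rule LIMSEQ_le_const[OF lim0]) (use bnd in blast)
  hence "l2_norm (A x) = 0" by simp
  hence Ax: "A x = (\<lambda>_. 0)" by (rule norm_zero_imp[OF Axl])
  have xK: "x \<in> Ks ev n" for n unfolding Ks_def using xV Ax by blast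
  define L where "L n = (LEAST c. \<exists>y\<in>Ks ev n. y c \<noteq> 0)" for n
  have cover: "\<exists>n. \<forall>y\<in>Ks ev n. y c = 0" for c
  proof (rule ccontr)
    assume "\<not> (\<exists>n. \<forall>y\<in>Ks ev n. y c = 0)"
    hence ex: "\<exists>y\<in>Ks ev n. y c \<noteq> 0" for n by blast
    have Lc: "L n \<le> c" for n unfolding L_def by (rule Least_le) (rule ex)
    have Lw: "\<exists>y\<in>Ks ev n. y (L n) \<noteq> 0" for n unfolding L_def by (rule LeastI_ex) (use ex in blast)
    have below: "\<forall>y\<in>Ks ev n. y c' = 0" if "c' < L n" for n c'
      using not_less_Least[OF that[unfolded L_def]] by blast
    have kill: "\<forall>y\<in>Ks ev n'. y c' = 0" if "odd n" "Suc n \<le> n'" "c' \<le> L n" for n n' c'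
    proof
      fix y assume y: "y \<in> Ks ev n'"
      have yS: "y \<in> Ks ev (Suc n)" using Ks_mono[OF that(2)] y by blast
      hence yK: "y \<in> Ks ev n" using Ks_mono[of n "Suc n"] by auto
      have "l2_inner y (ev n) = 0" using yS unfolding Ks_def Vs_def by auto
      moreover have "\<forall>y\<in>Ks ev n. l2_inner y (ev n) = 0 \<longrightarrow> y (L n) = 0"
      proof -
        have G: "odd n \<longrightarrow> (\<exists>c. \<exists>y\<in>Ks ev n. y c \<noteq> 0) \<longrightarrow>
            ev n \<in> Ks ev n \<and> (\<forall>y\<in>Ks ev n. l2_inner y (ev n) = 0 \<longrightarrow> y (LEAST c. \<exists>y\<in>Ks ev n. y c \<noteq> 0) = 0)"
          using ev_good[of n] unfolding good_def by (elim conjE) assumption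
        have "ev n \<in> Ks ev n \<and> (\<forall>y\<in>Ks ev n. l2_inner y (ev n) = 0 \<longrightarrow> y (LEAST c. \<exists>y\<in>Ks ev n. y c \<noteq> 0) = 0)"
          by (rule mp[OF mp[OF G that(1)] exI[of "\<lambda>c. \<exists>y\<in>Ks ev n. y c \<noteq> 0" c, OF ex[of n]]])
        thus ?thesis unfolding L_def by (rule conjunct2)
      qed
      ultimately have yL: "y (L n) = 0" using yK by blast
      show "y c' = 0"
      proof (cases "c' = L n")
        case True then show ?thesis using yL by simp
      next
        case False
        hence "c' < L n" using that(3) by simp
        thus ?thesis using below yK by blast
      qed
    qed
    have incr: "L n < L n'" if "odd n" "Suc n \<le> n'" for n n'
    proof (rule ccontr)
      assume "\<not> L n < L n'"
      hence "L n' \<le> L n" by simp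
      hence "\<forall>y\<in>Ks ev n'. y (L n') = 0" by (rule kill[OF that])
      thus False using Lw[of n'] by blast
    qed
    have grow: "L (2 * k + 1) \<ge> k" for k
    proof (induction k)
      case 0 then show ?case by simp
    next
      case (Suc k)
      have "L (2 * k + 1) < L (2 * Suc k + 1)" by (rule incr) auto
      thus ?case using Suc.IH by simp
    qed
    have "L (2 * Suc c + 1) \<ge> Suc c" by (rule grow)
    thus False using Lc[of "2 * Suc c + 1"] by simp
  qed
  show ?thesis
  proof
    fix c
    obtain n where "\<forall>y\<in>Ks ev n. y c = 0" using cover by blast
    thus "x c = 0" using xK by blast
  qed
qed

end


definition Dop :: "(nat \<Rightarrow> nat \<Rightarrow> complex) \<Rightarrow> (nat \<Rightarrow> real) \<Rightarrow> (nat \<Rightarrow> complex) \<Rightarrow> nat \<Rightarrow> complex" where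
  "Dop e c x = (\<lambda>i. \<Sum>n. complex_of_real (c n) * l2_inner x (e n) * e n i)"

locale onsys =
  fixes e :: "nat \<Rightarrow> nat \<Rightarrow> complex"
  assumes el2: "\<And>n. e n \<in> l2"
    and eorth: "\<And>m n. l2_inner (e m) (e n) = (if m = n then 1 else 0)"
begin

lemma enorm: "l2_norm (e n) = 1"
  using ONS_norm[of e UNIV n] el2 eorth unfolding ONS_def by simp

lemma ecoord: "cmod (e n i) \<le> 1"
  using l2_coord_le[OF el2, of n i] enorm by simp

lemma einner: "x \<in> l2 \<Longrightarrow> cmod (l2_inner x (e n)) \<le> l2_norm x"
  using inner_bound[OF _ el2, of x n] enorm by simp

context
  fixes c :: "nat \<Rightarrow> real"
  assumes cs: "summable (\<lambda>n. \<bar>c n\<bar>)"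
begin

definition CC where "CC = (\<Sum>n. \<bar>c n\<bar>)"

lemma CC_nonneg: "CC \<ge> 0"
  unfolding CC_def using cs by (simp add: suminf_nonneg)

lemma D_row:
  assumes x: "x \<in> l2"
  shows "summable (\<lambda>n. norm (complex_of_real (c n) * l2_inner x (e n) * e n i))"
proof (rule summable_comparison_test'[where g="\<lambda>n. l2_norm x * \<bar>c n\<bar>"])
  show "summable (\<lambda>n. l2_norm x * \<bar>c n\<bar>)" using cs by (rule summable_mult)
  fix n
  have "norm (complex_of_real (c n) * l2_inner x (e n) * e n i) = \<bar>c n\<bar> * (cmod (l2_inner x (e n)) * cmod (e n i))"
    by (simp add: norm_mult)
  also have "\<dots> \<le> \<bar>c n\<bar> * (l2_norm x * 1)"
    using einner[OF x, of n] ecoord[of n i] by (intro mult_left_mono mult_mono) (simp_all add: l2_norm_nonneg x)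
  finally show "norm (norm (complex_of_real (c n) * l2_inner x (e n) * e n i)) \<le> l2_norm x * \<bar>c n\<bar>"
    by (simp add: mult.commute)
qed

lemma D_inner:
  assumes x: "x \<in> l2" and y: "y \<in> l2"
  shows "l2_inner (Dop e c x) y = (\<Sum>n. complex_of_real (c n) * l2_inner x (e n) * l2_inner (e n) y)"
    and "summable (\<lambda>n. norm (complex_of_real (c n) * l2_inner x (e n) * l2_inner (e n) y))"
proof -
  define h where "h n i = complex_of_real (c n) * l2_inner x (e n) * e n i * cnj (y i)" for n i
  have hrow: "summable (\<lambda>i. norm (h n i))" for n
  proof -
    have "summable (\<lambda>i. (\<bar>c n\<bar> * cmod (l2_inner x (e n))) * (cmod (e n i) * cmod (y i)))"
      by (rule summable_mult[OF cs_abs(1)[OF el2 y]])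
    thus ?thesis unfolding h_def by (simp add: norm_mult mult_ac)
  qed
  have hrowv: "(\<Sum>i. norm (h n i)) \<le> \<bar>c n\<bar> * (l2_norm x * l2_norm y)" for n
  proof -
    have "(\<lambda>i. norm (h n i)) = (\<lambda>i. (\<bar>c n\<bar> * cmod (l2_inner x (e n))) * (cmod (e n i) * cmod (y i)))"
      unfolding h_def by (simp add: norm_mult fun_eq_iff mult_ac)
    hence "(\<Sum>i. norm (h n i)) = (\<Sum>i. (\<bar>c n\<bar> * cmod (l2_inner x (e n))) * (cmod (e n i) * cmod (y i)))" by simp
    also have "\<dots> = (\<bar>c n\<bar> * cmod (l2_inner x (e n))) * (\<Sum>i. cmod (e n i) * cmod (y i))"
      by (rule suminf_mult[OF cs_abs(1)[OF el2 y]])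
    also have "\<dots> \<le> (\<bar>c n\<bar> * l2_norm x) * (1 * l2_norm y)"
      using einner[OF x, of n] cs_abs(2)[OF el2 y, of n] enorm[of n]
      by (intro mult_mono mult_left_mono) (simp_all add: l2_norm_nonneg x suminf_nonneg cs_abs(1)[OF el2 y])
    finally show ?thesis by (simp add: mult_ac)
  qed
  have hsum: "summable (\<lambda>n. \<Sum>i. norm (h n i))"
  proof (rule summable_comparison_test'[where g="\<lambda>n. \<bar>c n\<bar> * (l2_norm x * l2_norm y)"])
    show "summable (\<lambda>n. \<bar>c n\<bar> * (l2_norm x * l2_norm y))" using cs by (rule summable_mult2)
    fix n show "norm (\<Sum>i. norm (h n i)) \<le> \<bar>c n\<bar> * (l2_norm x * l2_norm y)"
      using hrowv[of n] suminf_nonneg[OF hrow[of n]] by simp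
  qed
  have inner_e: "(\<Sum>i. h n i) = complex_of_real (c n) * l2_inner x (e n) * l2_inner (e n) y" for n
  proof -
    have "summable (\<lambda>i. e n i * cnj (y i))" by (rule inner_summable(2)[OF el2 y])
    thus ?thesis unfolding h_def l2_inner_def[of "e n" y]
      using suminf_mult[of "\<lambda>i. e n i * cnj (y i)" "complex_of_real (c n) * l2_inner x (e n)"]
      by (simp add: mult_ac)
  qed
  have "l2_inner (Dop e c x) y = (\<Sum>i. Dop e c x i * cnj (y i))"
    unfolding l2_inner_def[of "Dop e c x" y] ..
  also have "\<dots> = (\<Sum>i. \<Sum>n. h n i)"
  proof (rule suminf_cong)
    fix i
    have "Dop e c x i * cnj (y i) = (\<Sum>n. complex_of_real (c n) * l2_inner x (e n) * e n i) * cnj (y i)"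
      unfolding Dop_def ..
    also have "\<dots> = (\<Sum>n. complex_of_real (c n) * l2_inner x (e n) * e n i * cnj (y i))"
      by (rule suminf_mult2[OF summable_norm_cancel[OF D_row[OF x]]])
    finally show "Dop e c x i * cnj (y i) = (\<Sum>n. h n i)" unfolding h_def .
  qed
  also have "\<dots> = (\<Sum>n. \<Sum>i. h n i)" by (rule suminf_swap_abs(1)[OF hrow hsum, symmetric])
  finally show "l2_inner (Dop e c x) y = (\<Sum>n. complex_of_real (c n) * l2_inner x (e n) * l2_inner (e n) y)"
    unfolding inner_e .
  show "summable (\<lambda>n. norm (complex_of_real (c n) * l2_inner x (e n) * l2_inner (e n) y))"
  proof (rule summable_comparison_test'[OF hsum])
    fix n
    have "norm (\<Sum>i. h n i) \<le> (\<Sum>i. norm (h n i))" by (rule summable_norm[OF hrow])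
    thus "norm (norm (complex_of_real (c n) * l2_inner x (e n) * l2_inner (e n) y)) \<le> (\<Sum>i. norm (h n i))"
      unfolding inner_e by simp
  qed
qed

lemma D_inner_bound:
  assumes x: "x \<in> l2" and y: "y \<in> l2"
  shows "cmod (l2_inner (Dop e c x) y) \<le> CC * l2_norm x * l2_norm y"
proof -
  have "cmod (l2_inner (Dop e c x) y) \<le> (\<Sum>n. norm (complex_of_real (c n) * l2_inner x (e n) * l2_inner (e n) y))"
    unfolding D_inner(1)[OF x y] by (rule summable_norm[OF D_inner(2)[OF x y]])
  also have "\<dots> \<le> (\<Sum>n. \<bar>c n\<bar> * (l2_norm x * l2_norm y))"
  proof (rule suminf_le[OF _ D_inner(2)[OF x y]])
    show "summable (\<lambda>n. \<bar>c n\<bar> * (l2_norm x * l2_norm y))" using cs by (rule summable_mult2)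
    fix n
    have "cmod (l2_inner (e n) y) \<le> l2_norm y" using inner_bound[OF el2 y, of n] enorm by simp
    hence "cmod (l2_inner x (e n)) * cmod (l2_inner (e n) y) \<le> l2_norm x * l2_norm y"
      using einner[OF x, of n] by (intro mult_mono) (simp_all add: l2_norm_nonneg x)
    hence "\<bar>c n\<bar> * (cmod (l2_inner x (e n)) * cmod (l2_inner (e n) y)) \<le> \<bar>c n\<bar> * (l2_norm x * l2_norm y)"
      by (rule mult_left_mono) simp
    thus "norm (complex_of_real (c n) * l2_inner x (e n) * l2_inner (e n) y) \<le> \<bar>c n\<bar> * (l2_norm x * l2_norm y)"
      by (simp add: norm_mult mult.assoc)
  qed
  also have "\<dots> = CC * l2_norm x * l2_norm y" unfolding CC_def using suminf_mult2[OF cs, of "l2_norm x * l2_norm y"] by (simp add: mult.assoc)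
  finally show ?thesis .
qed

lemma D_l2:
  assumes x: "x \<in> l2"
  shows "Dop e c x \<in> l2" and "l2_norm (Dop e c x) \<le> CC * l2_norm x"
proof -
  let ?d = "Dop e c x"
  define K where "K = CC * l2_norm x"
  have K0: "K \<ge> 0" unfolding K_def using CC_nonneg l2_norm_nonneg[OF x] by simp
  have part: "(\<Sum>i<N. (cmod (?d i))\<^sup>2) \<le> K\<^sup>2" for N
  proof -
    define S where "S = (\<Sum>i<N. (cmod (?d i))\<^sup>2)"
    have S0: "S \<ge> 0" unfolding S_def by (simp add: sum_nonneg)
    have tl: "trunc N ?d \<in> l2" by (rule trunc_l2)
    have "l2_inner ?d (trunc N ?d) = (\<Sum>i<N. ?d i * cnj (?d i))" by (rule inner_trunc)
    also have "\<dots> = complex_of_real S" unfolding S_def of_real_sum by (simp only: complex_norm_square)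
    finally have eq: "l2_inner ?d (trunc N ?d) = complex_of_real S" .
    have "(l2_norm (trunc N ?d))\<^sup>2 = (\<Sum>i. (cmod (trunc N ?d i))\<^sup>2)" by (rule l2_norm_sq[OF tl])
    also have "\<dots> = S" unfolding S_def trunc_def by (subst suminf_finite[of "{..<N}"]) auto
    finally have nt: "l2_norm (trunc N ?d) = sqrt S" using l2_norm_nonneg[OF tl] by (metis real_sqrt_unique)
    have "S \<le> CC * l2_norm x * l2_norm (trunc N ?d)" using D_inner_bound[OF x tl] eq S0 by simp
    hence le: "S \<le> K * sqrt S" unfolding nt K_def by simp
    show ?thesis
    proof (cases "S = 0")
      case True thus ?thesis unfolding S_def by simp
    next
      case False
      hence pos: "sqrt S > 0" using S0 by simp
      have "sqrt S * sqrt S \<le> K * sqrt S" using le S0 by simp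
      hence "sqrt S \<le> K" using pos by (rule mult_right_le_imp_le)
      hence "(sqrt S)\<^sup>2 \<le> K\<^sup>2" using pos by (intro power_mono) auto
      thus ?thesis unfolding S_def using S0 by (simp add: S_def)
    qed
  qed
  show dl: "?d \<in> l2" unfolding l2_def mem_Collect_eq
  proof (rule bounded_imp_summable)
    show "0 \<le> (cmod (?d n))\<^sup>2" for n by simp
    show "(\<Sum>j\<le>n. (cmod (?d j))\<^sup>2) \<le> K\<^sup>2" for n using part[of "Suc n"] by (simp add: lessThan_Suc_atMost)
  qed
  have "(\<Sum>j. (cmod (?d j))\<^sup>2) \<le> K\<^sup>2"
    by (rule suminf_le_const) (use dl part in \<open>simp_all add: l2_def\<close>)
  hence "(l2_norm ?d)\<^sup>2 \<le> K\<^sup>2" using l2_norm_sq[OF dl] by simp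
  thus "l2_norm ?d \<le> CC * l2_norm x" unfolding K_def[symmetric] using K0 by (simp add: power2_le_iff_abs_le)
qed

lemma D_lin:
  assumes x: "x \<in> l2" and y: "y \<in> l2"
  shows "Dop e c (\<lambda>n. a * x n + b * y n) = (\<lambda>n. a * Dop e c x n + b * Dop e c y n)"
proof
  fix i
  have li: "l2_inner (\<lambda>n. a * x n + b * y n) (e k) = a * l2_inner x (e k) + b * l2_inner y (e k)" for k
    by (rule inner_lin_left[OF x y el2])
  have "Dop e c (\<lambda>n. a * x n + b * y n) i
      = (\<Sum>k. a * (complex_of_real (c k) * l2_inner x (e k) * e k i) + b * (complex_of_real (c k) * l2_inner y (e k) * e k i))"
    unfolding Dop_def li by (simp add: algebra_simps)
  also have "\<dots> = (\<Sum>k. a * (complex_of_real (c k) * l2_inner x (e k) * e k i)) + (\<Sum>k. b * (complex_of_real (c k) * l2_inner y (e k) * e k i))"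
    using summable_norm_cancel[OF D_row[OF x]] summable_norm_cancel[OF D_row[OF y]]
    by (intro suminf_add[symmetric] summable_mult)
  also have "\<dots> = a * Dop e c x i + b * Dop e c y i"
    unfolding Dop_def using summable_norm_cancel[OF D_row[OF x]] summable_norm_cancel[OF D_row[OF y]]
    by (simp add: suminf_mult)
  finally show "Dop e c (\<lambda>n. a * x n + b * y n) i = a * Dop e c x i + b * Dop e c y i" .
qed

lemma D_bounded: "l2_bounded_op (Dop e c)"
  unfolding l2_bounded_op_def using D_l2 D_lin by blast

lemma suminf_single: "(\<Sum>n. if n = m then (a::complex) else 0) = a"
  by (subst suminf_finite[of "{m}"]) auto

lemma D_eig: "Dop e c (e m) = (\<lambda>i. complex_of_real (c m) * e m i)"
proof
  fix i
  have "Dop e c (e m) i = (\<Sum>n. if n = m then complex_of_real (c m) * e m i else 0)"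
    unfolding Dop_def by (rule suminf_cong) (simp add: eorth)
  thus "Dop e c (e m) i = complex_of_real (c m) * e m i" by (simp add: suminf_single)
qed

lemma D_coef:
  assumes x: "x \<in> l2"
  shows "l2_inner (Dop e c x) (e m) = complex_of_real (c m) * l2_inner x (e m)"
proof -
  have "l2_inner (Dop e c x) (e m) = (\<Sum>n. complex_of_real (c n) * l2_inner x (e n) * l2_inner (e n) (e m))"
    by (rule D_inner(1)[OF x el2])
  also have "\<dots> = (\<Sum>n. if n = m then complex_of_real (c m) * l2_inner x (e m) else 0)"
    by (rule suminf_cong) (simp add: eorth)
  finally show ?thesis by (simp add: suminf_single)
qed

end

end


context absmat
begin

definition sig :: "nat \<Rightarrow> real" where "sig n = l2_norm (A (ev n))"
definition mu :: "nat \<Rightarrow> real" where "mu n = (sig n)\<^sup>2"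

lemma sig_nonneg: "sig n \<ge> 0"
  unfolding sig_def by (rule l2_norm_nonneg[OF A_l2(1)[OF ev_l2]])

lemma sig_abs_summable: "summable (\<lambda>n. \<bar>sig n\<bar>)"
  using sigma_summable sig_nonneg unfolding sig_def by simp

lemma mu_abs_summable: "summable (\<lambda>n. \<bar>mu n\<bar>)"
proof -
  define S where "S = (\<Sum>n. sig n)"
  have le: "sig n \<le> S" for n unfolding S_def
    by (rule single_le_suminf) (use sigma_summable sig_nonneg in \<open>simp_all add: sig_def\<close>)
  show ?thesis
  proof (rule summable_comparison_test'[where g="\<lambda>n. S * sig n"])
    show "summable (\<lambda>n. S * sig n)" using sigma_summable unfolding sig_def by (rule summable_mult)
    fix n show "norm \<bar>mu n\<bar> \<le> S * sig n"
      unfolding mu_def using le[of n] sig_nonneg[of n] by (simp add: power2_eq_square mult_right_mono)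
  qed
qed

interpretation E: onsys ev
  by unfold_locales (rule ev_l2, rule ev_orth)

abbreviation P where "P \<equiv> Dop ev sig"

lemma PP:
  assumes x: "x \<in> l2"
  shows "P (P x) = Dop ev mu x"
proof
  fix i
  have "P (P x) i = (\<Sum>n. complex_of_real (sig n) * l2_inner (P x) (ev n) * ev n i)" unfolding Dop_def ..
  also have "\<dots> = (\<Sum>n. complex_of_real (mu n) * l2_inner x (ev n) * ev n i)"
  proof (rule suminf_cong)
    fix n
    have "l2_inner (P x) (ev n) = complex_of_real (sig n) * l2_inner x (ev n)"
      by (rule E.D_coef[OF sig_abs_summable x])
    thus "complex_of_real (sig n) * l2_inner (P x) (ev n) * ev n i = complex_of_real (mu n) * l2_inner x (ev n) * ev n i"
      unfolding mu_def by (simp add: power2_eq_square)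
  qed
  also have "\<dots> = Dop ev mu x i" unfolding Dop_def ..
  finally show "P (P x) i = Dop ev mu x i" .
qed

lemma BA_D:
  assumes x: "x \<in> l2"
  shows "B (A x) = Dop ev mu x"
proof -
  have Axl: "A x \<in> l2" by (rule A_l2(1)[OF x])
  have BAl: "B (A x) \<in> l2" by (rule B_l2[OF Axl])
  have Dl: "Dop ev mu x \<in> l2" by (rule E.D_l2(1)[OF mu_abs_summable x])
  define z where "z = (\<lambda>i. B (A x) i - Dop ev mu x i)"
  have zl: "z \<in> l2" unfolding z_def by (rule l2_diff[OF BAl Dl])
  have "l2_inner z (ev m) = 0" for m
  proof -
    have "l2_inner z (ev m) = l2_inner (B (A x)) (ev m) - l2_inner (Dop ev mu x) (ev m)"
      unfolding z_def by (rule inner_diff_left[OF BAl Dl ev_l2])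
    also have "l2_inner (Dop ev mu x) (ev m) = complex_of_real (mu m) * l2_inner x (ev m)"
      by (rule E.D_coef[OF mu_abs_summable x])
    also have "l2_inner (B (A x)) (ev m) = l2_inner (A x) (A (ev m))" by (rule BA_inner[OF x ev_l2])
    also have "\<dots> = cnj (l2_inner (A (ev m)) (A x))" using inner_cnj[OF A_l2(1)[OF ev_l2] Axl] by simp
    also have "l2_inner (A (ev m)) (A x) = l2_inner (B (A (ev m))) x" using BA_inner[OF ev_l2 x] by simp
    also have "\<dots> = l2_inner (\<lambda>i. complex_of_real (mu m) * ev m i) x"
      using ev_eig[of m] unfolding mu_def sig_def by simp
    also have "\<dots> = complex_of_real (mu m) * l2_inner (ev m) x" by (rule inner_scale_left[OF ev_l2 x])
    finally show ?thesis using inner_cnj[OF ev_l2 x, of m] by simp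
  qed
  hence "z = (\<lambda>_. 0)" by (rule ev_complete[OF zl])
  thus ?thesis unfolding z_def by (simp add: fun_eq_iff)
qed

lemma P_selfadj:
  assumes x: "x \<in> l2" and y: "y \<in> l2"
  shows "l2_inner (P x) y = l2_inner x (P y)"
proof -
  have "l2_inner x (P y) = cnj (l2_inner (P y) x)" using inner_cnj[OF E.D_l2(1)[OF sig_abs_summable y] x] by simp
  also have "\<dots> = cnj (\<Sum>n. complex_of_real (sig n) * l2_inner y (ev n) * l2_inner (ev n) x)"
    using E.D_inner(1)[OF sig_abs_summable y x] by simp
  also have "\<dots> = (\<Sum>n. cnj (complex_of_real (sig n) * l2_inner y (ev n) * l2_inner (ev n) x))"
    by (rule suminf_cnj[OF summable_norm_cancel[OF E.D_inner(2)[OF sig_abs_summable y x]]])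
  also have "\<dots> = (\<Sum>n. complex_of_real (sig n) * l2_inner x (ev n) * l2_inner (ev n) y)"
  proof (rule suminf_cong)
    fix n
    have "cnj (l2_inner y (ev n)) = l2_inner (ev n) y" by (rule inner_cnj[OF y ev_l2])
    moreover have "cnj (l2_inner (ev n) x) = l2_inner x (ev n)" by (rule inner_cnj[OF ev_l2 x])
    ultimately show "cnj (complex_of_real (sig n) * l2_inner y (ev n) * l2_inner (ev n) x) = complex_of_real (sig n) * l2_inner x (ev n) * l2_inner (ev n) y"
      by (simp add: mult_ac)
  qed
  also have "\<dots> = l2_inner (P x) y" using E.D_inner(1)[OF sig_abs_summable x y] by simp
  finally show ?thesis by simp
qed

lemma P_pos:
  assumes x: "x \<in> l2"
  shows "l2_inner (P x) x \<in> \<real> \<and> Re (l2_inner (P x) x) \<ge> 0"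
proof -
  define g where "g n = sig n * (cmod (l2_inner x (ev n)))\<^sup>2" for n
  have trm: "complex_of_real (sig n) * l2_inner x (ev n) * l2_inner (ev n) x = complex_of_real (g n)" for n
  proof -
    have "l2_inner (ev n) x = cnj (l2_inner x (ev n))" using inner_cnj[OF x ev_l2] by simp
    hence "l2_inner x (ev n) * l2_inner (ev n) x = l2_inner x (ev n) * cnj (l2_inner x (ev n))" by simp
    also have "\<dots> = complex_of_real ((cmod (l2_inner x (ev n)))\<^sup>2)" by (simp only: complex_norm_square)
    finally have "l2_inner x (ev n) * l2_inner (ev n) x = complex_of_real ((cmod (l2_inner x (ev n)))\<^sup>2)" .
    thus ?thesis unfolding g_def by (simp add: mult.assoc)
  qed
  have g0: "g n \<ge> 0" for n unfolding g_def using sig_nonneg by simp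
  have gs: "summable g"
  proof -
    have "summable (\<lambda>n. norm (complex_of_real (g n)))"
      using E.D_inner(2)[OF sig_abs_summable x x] unfolding trm .
    thus ?thesis using g0 by simp
  qed
  have "l2_inner (P x) x = (\<Sum>n. complex_of_real (g n))"
    using E.D_inner(1)[OF sig_abs_summable x x] unfolding trm .
  also have "\<dots> = complex_of_real (\<Sum>n. g n)" by (rule suminf_of_real[OF gs, symmetric])
  finally have eq: "l2_inner (P x) x = complex_of_real (\<Sum>n. g n)" .
  show ?thesis unfolding eq using suminf_nonneg[OF gs g0] by simp
qed

theorem main: "(\<forall>x\<in>l2. \<forall>i. summable (\<lambda>j. M i j * x j)) \<and> trace_class (matrix_op M)"
proof (intro conjI ballI allI)
  show "summable (\<lambda>j. M i j * x j)" if "x \<in> l2" for x i by (rule row_summable[OF that])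
  have Pb: "l2_bounded_op P" by (rule E.D_bounded[OF sig_abs_summable])
  have pos: "l2_positive P" unfolding l2_positive_def using Pb P_selfadj P_pos by blast
  have adj: "l2_adjoint A B" unfolding l2_adjoint_def
    using absmat.A_bounded[OF absmat_Mt] adjoint_eq by blast
  have sq: "\<forall>x\<in>l2. P (P x) = B (A x)" using PP BA_D by simp
  have absop: "l2_abs_op A P" unfolding l2_abs_op_def using pos adj sq by blast
  have onb: "l2_onb ev" unfolding l2_onb_def using ev_l2 ev_orth ev_complete by blast
  have eigP: "\<forall>n. P (ev n) = (\<lambda>i. complex_of_real (sig n) * ev n i)"
    using E.D_eig[OF sig_abs_summable] by blast
  have "summable sig" using sigma_summable unfolding sig_def .
  hence "l2_discrete_summable P" unfolding l2_discrete_summable_def using onb eigP by blast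
  thus "trace_class A" unfolding trace_class_def using A_bounded absop by blast
qed

end


lemma ps_prime: "prime (prime_seq n)"
  unfolding prime_seq_def using enumerate_in_set[OF primes_infinite] by simp

lemma ps_ge: "prime_seq n \<ge> n + 2"
proof (induction n)
  case 0
  then show ?case using prime_ge_2_nat[OF ps_prime[of 0]] by simp
next
  case (Suc n)
  have "prime_seq n < prime_seq (Suc n)"
    unfolding prime_seq_def by (rule enumerate_mono[OF _ primes_infinite]) simp
  then show ?case using Suc.IH by simp
qed

lemma two_mult_le_pow: "2 * p \<le> (2::nat) ^ p"
proof (induction p)
  case 0 then show ?case by simp
next
  case (Suc p)
  show ?case
  proof (cases "p = 0")
    case True then show ?thesis by simp
  next
    case False
    hence "1 \<le> p" by simp
    hence "2 \<le> (2::nat) ^ p" using power_increasing[of 1 p "2::nat"] by simp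
    thus ?thesis using Suc.IH by simp
  qed
qed

lemma pow_aux:
  fixes p :: nat
  assumes p: "p \<ge> 2"
  shows "(2 * p) ^ k \<le> 2 ^ (p ^ Suc k - p)"
proof (induction k)
  case 0 then show ?case by simp
next
  case (Suc k)
  have pk: "p ^ Suc k \<ge> p" using p by (simp add: self_le_power)
  have pk2: "p ^ Suc (Suc k) - p \<ge> p ^ Suc k"
  proof -
    have "p ^ Suc (Suc k) = p * p ^ Suc k" by simp
    also have "\<dots> \<ge> 2 * p ^ Suc k" using p by (intro mult_right_mono) simp_all
    finally show ?thesis using pk by arith
  qed
  have "(2 * p) ^ Suc k = (2 * p) * (2 * p) ^ k" by simp
  also have "\<dots> \<le> 2 ^ p * 2 ^ (p ^ Suc k - p)" by (intro mult_mono two_mult_le_pow Suc.IH) simp_all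
  also have "\<dots> = 2 ^ (p ^ Suc k)" using pk by (simp add: power_add[symmetric])
  also have "\<dots> \<le> 2 ^ (p ^ Suc (Suc k) - p)" using pk2 by (intro power_increasing) simp_all
  finally show ?case .
qed

lemma pow_ineq:
  fixes p q :: nat
  assumes p: "p \<ge> 2" and q: "q \<ge> 2"
  shows "p ^ k * q ^ p * 2 ^ k \<le> q ^ (p ^ Suc k)"
proof -
  have pk: "p ^ Suc k \<ge> p" using p by (simp add: self_le_power)
  have "p ^ k * q ^ p * 2 ^ k = q ^ p * (2 * p) ^ k" by (simp add: power_mult_distrib mult_ac)
  also have "\<dots> \<le> q ^ p * 2 ^ (p ^ Suc k - p)" using pow_aux[OF p] by simp
  also have "\<dots> \<le> q ^ p * q ^ (p ^ Suc k - p)" using q by (intro mult_left_mono power_mono) simp_all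
  also have "\<dots> = q ^ (p ^ Suc k)" using pk by (simp add: power_add[symmetric])
  finally show ?thesis .
qed

definition Fterm :: "real \<Rightarrow> real \<Rightarrow> nat \<Rightarrow> real" where
  "Fterm x y k = x ^ k * (y powr (- (x ^ (Suc k)))) / (1 - y powr (- (x ^ (Suc k))))\<^sup>2"

lemma F_eq: "F x y = (\<Sum>k. Fterm x y k)"
  unfolding F_def Fterm_def ..

lemma Fterm_bound:
  fixes p q :: nat
  assumes p: "p \<ge> 2" and q: "q \<ge> 2"
  shows "0 \<le> Fterm (real p) (real q) k"
    and "Fterm (real p) (real q) k \<le> 2 * (1 / real (q ^ p)) * (1/2) ^ k"
proof -
  define N where "N = q ^ (p ^ Suc k)"
  define u where "u = real q powr (- (real p ^ Suc k))"
  have "real p ^ Suc k = real (p ^ Suc k)" by simp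
  hence "u = inverse (real q powr real (p ^ Suc k))" unfolding u_def by (simp add: powr_minus)
  also have "real q powr real (p ^ Suc k) = real q ^ (p ^ Suc k)" using q by (intro powr_realpow) simp
  finally have u: "u = 1 / real N" unfolding N_def by (simp add: divide_inverse)
  have "p \<le> p ^ Suc k" using p by (intro self_le_power) simp_all
  hence "p ^ Suc k \<ge> 2" using p by linarith
  hence "N \<ge> 2 ^ 2" unfolding N_def using q by (intro order.trans[OF power_mono power_increasing]) simp_all
  hence N4: "real N \<ge> 4" by simp
  have u0: "u > 0" unfolding u using N4 by simp
  have u4: "u \<le> 1/4" unfolding u using N4 by (simp add: field_simps)
  have den: "(1 - u)\<^sup>2 \<ge> 9/16"
  proof -
    have "3/4 \<le> 1 - u" using u4 by simp
    hence "(3/4)\<^sup>2 \<le> (1 - u)\<^sup>2" by (rule power_mono) simp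
    thus ?thesis by (simp add: power2_eq_square)
  qed
  have ft: "Fterm (real p) (real q) k = real p ^ k * u / (1 - u)\<^sup>2" unfolding Fterm_def u_def ..
  show "0 \<le> Fterm (real p) (real q) k" unfolding ft using u0 by simp
  have ineq: "real (p ^ k * q ^ p * 2 ^ k) \<le> real N" unfolding N_def by (simp only: of_nat_le_iff) (rule pow_ineq[OF p q])
  have qp: "real (q ^ p) > 0" using q by simp
  have "real p ^ k * u = real p ^ k / real N" unfolding u by simp
  also have "\<dots> \<le> 1 / (real (q ^ p) * 2 ^ k)"
    using ineq qp N4 by (simp add: field_simps)
  finally have a: "real p ^ k * u \<le> 1 / (real (q ^ p) * 2 ^ k)" .
  have "Fterm (real p) (real q) k = real p ^ k * u / (1 - u)\<^sup>2" by (rule ft)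
  also have "\<dots> \<le> real p ^ k * u / (9/16)"
    using den u0 u4 by (intro divide_left_mono) simp_all
  also have "\<dots> \<le> (1 / (real (q ^ p) * 2 ^ k)) / (9/16)" using a by (intro divide_right_mono) simp_all
  also have "\<dots> \<le> 2 * (1 / real (q ^ p)) * (1/2) ^ k" using qp by (simp add: field_simps power_one_over)
  finally show "Fterm (real p) (real q) k \<le> 2 * (1 / real (q ^ p)) * (1/2) ^ k" .
qed

lemma F_bound:
  fixes p q :: nat
  assumes p: "p \<ge> 2" and q: "q \<ge> 2"
  shows "0 \<le> F (real p) (real q)" and "F (real p) (real q) \<le> 4 / real (q ^ p)"
proof -
  have gs: "summable (\<lambda>k. 2 * (1 / real (q ^ p)) * (1/2::real) ^ k)"
    by (intro summable_mult summable_geometric) simp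
  have fs: "summable (Fterm (real p) (real q))"
    by (rule summable_comparison_test'[OF gs]) (use Fterm_bound[OF p q] in simp)
  show "0 \<le> F (real p) (real q)" unfolding F_eq by (rule suminf_nonneg[OF fs Fterm_bound(1)[OF p q]])
  have "F (real p) (real q) \<le> (\<Sum>k. 2 * (1 / real (q ^ p)) * (1/2::real) ^ k)"
    unfolding F_eq by (rule suminf_le[OF Fterm_bound(2)[OF p q] fs gs])
  also have "\<dots> = 2 * (1 / real (q ^ p)) * (\<Sum>k. (1/2::real) ^ k)"
    by (rule suminf_mult[OF summable_geometric]) simp
  also have "(\<Sum>k. (1/2::real) ^ k) = 2" using suminf_geometric[of "1/2::real"] by simp
  finally show "F (real p) (real q) \<le> 4 / real (q ^ p)" by simp
qed

lemma QNC_bound: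
  fixes p q :: nat
  assumes p: "p \<ge> 2" and q: "q \<ge> 2"
  shows "\<bar>QNC (real p) (real q)\<bar> \<le> 1 / real (q ^ p) + 1 / real (p ^ q)"
proof -
  let ?x = "real p" and ?y = "real q"
  have x: "?x \<ge> 2" and y: "?y \<ge> 2" using p q by simp_all
  have F1: "0 \<le> F ?x ?y" "F ?x ?y \<le> 4 / real (q ^ p)" using F_bound[OF p q] by auto
  have F2: "0 \<le> F ?y ?x" "F ?y ?x \<le> 4 / real (p ^ q)" using F_bound[OF q p] by auto
  have xy: "12 * ?x * ?y > 0" using x y by simp
  have "\<bar>?x * (?y - 1) * F ?x ?y - ?y * (?x - 1) * F ?y ?x\<bar> \<le> ?x * (?y - 1) * F ?x ?y + ?y * (?x - 1) * F ?y ?x"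
    using x y F1 F2 by (intro abs_triangle_ineq4[THEN order.trans]) simp
  also have "\<dots> \<le> ?x * ?y * F ?x ?y + ?y * ?x * F ?y ?x"
    using x y F1 F2 by (intro add_mono mult_right_mono mult_left_mono) simp_all
  finally have num: "\<bar>?x * (?y - 1) * F ?x ?y - ?y * (?x - 1) * F ?y ?x\<bar> \<le> (12 * ?x * ?y) * ((F ?x ?y + F ?y ?x) / 12)"
    by (simp add: algebra_simps)
  have "\<bar>QNC ?x ?y\<bar> = \<bar>?x * (?y - 1) * F ?x ?y - ?y * (?x - 1) * F ?y ?x\<bar> / (12 * ?x * ?y)"
    unfolding QNC_def using xy by (simp add: abs_divide)
  also have "\<dots> \<le> (F ?x ?y + F ?y ?x) / 12" using num xy by (simp add: divide_le_eq mult.commute)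
  also have "\<dots> \<le> (4 / real (q ^ p) + 4 / real (p ^ q)) / 12" using F1 F2 by simp
  also have "\<dots> \<le> 1 / real (q ^ p) + 1 / real (p ^ q)" using p q by (simp add: field_simps)
  finally show ?thesis .
qed


definition aa :: "nat \<Rightarrow> real" where "aa j = inverse (real (j + 2) ^ 2)"
definition bb :: "nat \<Rightarrow> real" where "bb i = (1/2) ^ i"

lemma aa_summable: "summable aa"
proof -
  have "summable (\<lambda>n. inverse (real n ^ 2))" by (rule inverse_power_summable) simp
  hence "summable (\<lambda>n. inverse (real (n + 2) ^ 2))" by (subst summable_iff_shift)
  thus ?thesis unfolding aa_def .
qed

lemma bb_summable: "summable bb"
  unfolding bb_def by (rule summable_geometric) simp

lemma aa_nonneg: "aa j \<ge> 0" unfolding aa_def by simp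
lemma bb_nonneg: "bb i \<ge> 0" unfolding bb_def by simp

lemma pow_ps_bound:
  "1 / real (prime_seq j ^ prime_seq i) \<le> aa j * bb i"
proof -
  define p where "p = prime_seq i"
  define q where "q = prime_seq j"
  have p: "p \<ge> i + 2" unfolding p_def by (rule ps_ge)
  have q: "q \<ge> j + 2" unfolding q_def by (rule ps_ge)
  have "(j + 2) ^ 2 * 2 ^ i \<le> q ^ 2 * q ^ (p - 2)"
  proof (rule mult_mono)
    show "(j + 2) ^ 2 \<le> q ^ 2" using q by (rule power_mono) simp
    have "(2::nat) ^ i \<le> 2 ^ (p - 2)" using p by (intro power_increasing) simp_all
    also have "\<dots> \<le> q ^ (p - 2)" using q by (intro power_mono) simp_all
    finally show "2 ^ i \<le> q ^ (p - 2)" .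
  qed simp_all
  also have "q ^ 2 * q ^ (p - 2) = q ^ p"
  proof -
    define d where "d = p - 2"
    have pd: "p = 2 + d" unfolding d_def using p by simp
    have "q ^ 2 * q ^ (p - 2) = q ^ 2 * q ^ d" by (simp add: d_def)
    also have "\<dots> = q ^ (2 + d)" by (rule power_add[symmetric])
    also have "\<dots> = q ^ p" using pd by simp
    finally show ?thesis .
  qed
  finally have le: "(j + 2) ^ 2 * 2 ^ i \<le> q ^ p" .
  hence le': "real ((j + 2) ^ 2 * 2 ^ i) \<le> real (q ^ p)" by (simp only: of_nat_le_iff)
  have pos: "real ((j + 2) ^ 2 * 2 ^ i) > 0" by simp
  have "1 / real (q ^ p) \<le> 1 / real ((j + 2) ^ 2 * 2 ^ i)"
  proof (rule divide_left_mono)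
    have "real (q ^ p) > 0" using q by simp
    thus "0 < real (q ^ p) * real ((j + 2) ^ 2 * 2 ^ i)" using pos by (rule mult_pos_pos)
  qed (use le' in simp_all)
  also have "\<dots> = aa j * bb i" unfolding aa_def bb_def by (simp add: field_simps power_one_over)
  finally show ?thesis unfolding p_def q_def .
qed

lemma Rmat_bound: "norm (Rmat i j) \<le> aa j * bb i + aa i * bb j"
proof -
  have p: "prime_seq i \<ge> 2" and q: "prime_seq j \<ge> 2" using ps_ge[of i] ps_ge[of j] by simp_all
  have "norm (Rmat i j) = \<bar>QNC (real (prime_seq i)) (real (prime_seq j))\<bar>" unfolding Rmat_def by simp
  also have "\<dots> \<le> 1 / real (prime_seq j ^ prime_seq i) + 1 / real (prime_seq i ^ prime_seq j)"
    by (rule QNC_bound[OF p q])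
  also have "\<dots> \<le> aa j * bb i + aa i * bb j" by (intro add_mono pow_ps_bound)
  finally show ?thesis .
qed

lemma absmat_Rmat: "absmat Rmat"
proof
  have gs: "summable (\<lambda>j. aa j * bb i + aa i * bb j)" for i
    by (intro summable_add summable_mult2 summable_mult aa_summable bb_summable)
  show rows: "summable (\<lambda>j. norm (Rmat i j))" for i
  proof (rule summable_comparison_test'[OF gs[of i]])
    fix n show "norm (norm (Rmat i n)) \<le> aa n * bb i + aa i * bb n" using Rmat_bound[of i n] by simp
  qed
  have rowle: "(\<Sum>j. norm (Rmat i j)) \<le> suminf aa * bb i + aa i * suminf bb" for i
  proof -
    have "(\<Sum>j. norm (Rmat i j)) \<le> (\<Sum>j. aa j * bb i + aa i * bb j)"
      by (rule suminf_le[OF Rmat_bound rows gs])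
    also have "\<dots> = suminf aa * bb i + aa i * suminf bb"
      using aa_summable bb_summable
      by (simp add: suminf_add[symmetric] summable_mult2 summable_mult suminf_mult2 suminf_mult)
    finally show ?thesis .
  qed
  have ts: "summable (\<lambda>i. suminf aa * bb i + aa i * suminf bb)"
    by (intro summable_add summable_mult2 summable_mult aa_summable bb_summable)
  show "summable (\<lambda>i. \<Sum>j. norm (Rmat i j))"
    by (rule summable_comparison_test'[OF ts]) (use rowle rows in \<open>simp add: suminf_nonneg\<close>)
qed

theorem theorem2p1:
  shows "(\<forall>x\<in>l2. \<forall>i. summable (\<lambda>j. Rmat i j * x j)) \<and> trace_class (matrix_op Rmat)"
  by (rule absmat.main[OF absmat_Rmat])


end
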